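(* Let $\Gamma\subseteq\Lambda^+$ be reflective, with $S\subseteq\mathbb Z\Gamma$, $E(\Gamma)$ part of a basis of $(\mathbb Z\Gamma)^*$, and $\mathbb Z\Gamma$ $W$-invariant. Let $\alpha\in S$. Then $a(\alpha)$ consists of exactly two elements $\delta_1,\delta_2$, both lying in $E(\Gamma)$, with $\alpha^\vee|_{\mathbb Z\Gamma}=\delta_1+\delta_2$; moreover, every $\delta\in E(\Gamma)$ with $\langle\delta,\alpha\rangle>0$ satisfies $\langle\delta,\alpha\rangle=1$.
   Context: $G$: complex connected reductive group with Borel $B$, maximal torus $T$, weight lattice $\Lambda$, dominant weights $\Lambda^+$, simple roots $S$, Weyl group $W$ (acting on $\Lambda$ and dually), coroots $\alpha^\vee\in\mathrm{Hom}(\Lambda,\mathbb Z)$. A finitely generated $\Gamma\subseteq\Lambda^+$ is normal if $\mathbb Z\Gamma\cap\mathbb Q_{\ge0}\Gamma=\Gamma$. $\Gamma$ is reflective if it is normal and (1) $\mathrm{rk}\,\mathbb Z\Gamma=\mathrm{rk}\,\Lambda$; (2) the set of hyperplanes spanned by the codimension-1 faces of the cone $\mathbb Q_{\ge0}\Gamma$ is $W$-stable; (3) every codimension-1 face of $\mathbb Q_{\ge0}\Gamma$ meets the open positive Weyl chamber. $\Gamma^\vee=\{v\in\mathrm{Hom}_{\mathbb Z}(\mathbb Z\Gamma,\mathbb Q):\langle v,\gamma\rangle\ge0\ \forall\gamma\in\Gamma\}$; $E(\Gamma)$ is the set of primitive elements of $(\mathbb Z\Gamma)^*$ spanning extremal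 rays of $\Gamma^\vee$. For $\alpha\in S\cap\mathbb Z\Gamma$, $a(\alpha)=\{\delta\in(\mathbb Z\Gamma)^*:\langle\delta,\alpha\rangle=1,\ \delta\in E(\Gamma)\text{ or }\alpha^\vee|_{\mathbb Z\Gamma}-\delta\in E(\Gamma)\}$. *)

theory Defs
  imports "HOL-Analysis.Analysis"
begin

text \<open>The weight lattice Lambda is modelled as the integer points Z^n inside real^n;
  Hom(Lambda,Z) is identified with Z^n via the inner product.\<close>

definition lattice :: "(real ^ 'n) set" where
  "lattice = {x. \<forall>i. x $ i \<in> \<int>}"

definition refl :: "(real ^ 'n) \<Rightarrow> (real ^ 'n) \<Rightarrow> (real ^ 'n) \<Rightarrow> real ^ 'n" where
  "refl a av x = x - (av \<bullet> x) *\<^sub>R a"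

definition corefl :: "(real ^ 'n) \<Rightarrow> (real ^ 'n) \<Rightarrow> (real ^ 'n) \<Rightarrow> real ^ 'n" where
  "corefl a av y = y - (y \<bullet> a) *\<^sub>R av"

definition reduced_root_datum :: "(real ^ 'n) set \<Rightarrow> ((real ^ 'n) \<Rightarrow> real ^ 'n) \<Rightarrow> bool" where
  "reduced_root_datum R cor \<longleftrightarrow>
     finite R \<and> R \<subseteq> lattice \<and> cor ` R \<subseteq> lattice \<and> inj_on cor R \<and>
     (\<forall>a\<in>R. cor a \<bullet> a = 2) \<and>
     (\<forall>a\<in>R. \<forall>b\<in>R. refl a (cor a) b \<in> R) \<and>
     (\<forall>a\<in>R. \<forall>b\<in>R. corefl a (cor a) (cor b) \<in> cor ` R) \<and>
     (\<forall>a\<in>R. \<forall>c::real. c *\<^sub>R a \<in> R \<longrightarrow> c = 1 \<or> c = -1)"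

definition is_base :: "(real ^ 'n) set \<Rightarrow> (real ^ 'n) set \<Rightarrow> bool" where
  "is_base R S \<longleftrightarrow> S \<subseteq> R \<and> independent S \<and>
     (\<forall>b\<in>R. \<exists>c :: (real ^ 'n) \<Rightarrow> int. b = (\<Sum>a\<in>S. of_int (c a) *\<^sub>R a) \<and>
         ((\<forall>a\<in>S. c a \<ge> 0) \<or> (\<forall>a\<in>S. c a \<le> 0)))"

inductive_set weyl :: "(real ^ 'n) set \<Rightarrow> ((real ^ 'n) \<Rightarrow> real ^ 'n) \<Rightarrow> ((real ^ 'n) \<Rightarrow> real ^ 'n) set"
  for S cor where
  weyl_id: "id \<in> weyl S cor"
| weyl_step: "w \<in> weyl S cor \<Longrightarrow> a \<in> S \<Longrightarrow> refl a (cor a) \<circ> w \<in> weyl S cor"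

definition dominant :: "(real ^ 'n) set \<Rightarrow> ((real ^ 'n) \<Rightarrow> real ^ 'n) \<Rightarrow> (real ^ 'n) set" where
  "dominant S cor = {x \<in> lattice. \<forall>a\<in>S. cor a \<bullet> x \<ge> 0}"

definition open_chamber :: "(real ^ 'n) set \<Rightarrow> ((real ^ 'n) \<Rightarrow> real ^ 'n) \<Rightarrow> (real ^ 'n) set" where
  "open_chamber S cor = {x. \<forall>a\<in>S. cor a \<bullet> x > 0}"

definition fin_gen_monoid :: "(real ^ 'n) set \<Rightarrow> bool" where
  "fin_gen_monoid G \<longleftrightarrow> (\<exists>H. finite H \<and>
     G = {x. \<exists>c :: (real ^ 'n) \<Rightarrow> nat. x = (\<Sum>h\<in>H. of_nat (c h) *\<^sub>R h)})"

definition ZG :: "(real ^ 'n) set \<Rightarrow> (real ^ 'n) set" where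
  "ZG G = {x. \<exists>F (c :: (real ^ 'n) \<Rightarrow> int). finite F \<and> F \<subseteq> G \<and>
              x = (\<Sum>g\<in>F. of_int (c g) *\<^sub>R g)}"

definition QG :: "(real ^ 'n) set \<Rightarrow> (real ^ 'n) set" where
  "QG G = {x. \<exists>F c. finite F \<and> F \<subseteq> G \<and> (\<forall>g\<in>F. c g \<in> \<rat> \<and> c g \<ge> 0) \<and>
              x = (\<Sum>g\<in>F. c g *\<^sub>R g)}"

definition normal :: "(real ^ 'n) set \<Rightarrow> bool" where
  "normal G \<longleftrightarrow> ZG G \<inter> QG G = G"

definition is_face :: "(real ^ 'n) set \<Rightarrow> (real ^ 'n) set \<Rightarrow> bool" where
  "is_face C F \<longleftrightarrow> (\<exists>u. (\<forall>i. u $ i \<in> \<rat>) \<and> (\<forall>x\<in>C. u \<bullet> x \<ge> 0) \<and>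
                       F = {x\<in>C. u \<bullet> x = 0})"

definition is_facet :: "(real ^ 'n) set \<Rightarrow> (real ^ 'n) set \<Rightarrow> bool" where
  "is_facet C F \<longleftrightarrow> is_face C F \<and> dim F + 1 = dim C"

definition facet_hyperplanes :: "(real ^ 'n) set \<Rightarrow> (real ^ 'n) set set" where
  "facet_hyperplanes C = {span F | F. is_facet C F}"

definition reflective :: "(real ^ 'n) set \<Rightarrow> ((real ^ 'n) \<Rightarrow> real ^ 'n) \<Rightarrow> (real ^ 'n) set \<Rightarrow> bool" where
  "reflective S cor G \<longleftrightarrow>
     fin_gen_monoid G \<and> G \<subseteq> dominant S cor \<and> normal G \<and>
     dim (ZG G) = CARD('n) \<and>
     (\<forall>w\<in>weyl S cor. \<forall>H\<in>facet_hyperplanes (QG G). w ` H \<in> facet_hyperplanes (QG G)) \<and>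
     (\<forall>F. is_facet (QG G) F \<longrightarrow> F \<inter> open_chamber S cor \<noteq> {})"

text \<open>Homomorphisms Z Gamma -> Q are represented as functions on real^n that are
  additive on Z Gamma, rational-valued there, and zero outside Z Gamma.\<close>
definition homQ :: "(real ^ 'n) set \<Rightarrow> ((real ^ 'n) \<Rightarrow> real) set" where
  "homQ G = {f. (\<forall>x\<in>ZG G. f x \<in> \<rat>) \<and> (\<forall>x\<in>ZG G. \<forall>y\<in>ZG G. f (x + y) = f x + f y) \<and>
               (\<forall>x. x \<notin> ZG G \<longrightarrow> f x = 0)}"

definition dualZ :: "(real ^ 'n) set \<Rightarrow> ((real ^ 'n) \<Rightarrow> real) set" where
  "dualZ G = {f \<in> homQ G. \<forall>x\<in>ZG G. f x \<in> \<int>}"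

definition dual_cone :: "(real ^ 'n) set \<Rightarrow> ((real ^ 'n) \<Rightarrow> real) set" where
  "dual_cone G = {f \<in> homQ G. \<forall>g\<in>G. f g \<ge> 0}"

definition extremal_ray_gen :: "((real ^ 'n) \<Rightarrow> real) set \<Rightarrow> ((real ^ 'n) \<Rightarrow> real) \<Rightarrow> bool" where
  "extremal_ray_gen K v \<longleftrightarrow> v \<in> K \<and> v \<noteq> (\<lambda>_. 0) \<and>
     (\<forall>a\<in>K. \<forall>b\<in>K. v = (\<lambda>x. a x + b x) \<longrightarrow>
        (\<exists>t. t \<in> \<rat> \<and> t \<ge> 0 \<and> a = (\<lambda>x. t * v x)) \<and>
        (\<exists>t. t \<in> \<rat> \<and> t \<ge> 0 \<and> b = (\<lambda>x. t * v x)))"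

definition primitive :: "(real ^ 'n) set \<Rightarrow> ((real ^ 'n) \<Rightarrow> real) \<Rightarrow> bool" where
  "primitive G d \<longleftrightarrow> d \<in> dualZ G \<and> d \<noteq> (\<lambda>_. 0) \<and>
     (\<forall>d'\<in>dualZ G. \<forall>k::int. d = (\<lambda>x. of_int k * d' x) \<longrightarrow> \<bar>k\<bar> = 1)"

definition EG :: "(real ^ 'n) set \<Rightarrow> ((real ^ 'n) \<Rightarrow> real) set" where
  "EG G = {d. primitive G d \<and> extremal_ray_gen (dual_cone G) d}"

definition part_of_basis :: "(real ^ 'n) set \<Rightarrow> ((real ^ 'n) \<Rightarrow> real) set \<Rightarrow> bool" where
  "part_of_basis G E \<longleftrightarrow> (\<exists>B. B \<subseteq> dualZ G \<and> E \<subseteq> B \<and>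
     (\<forall>F (c :: ((real ^ 'n) \<Rightarrow> real) \<Rightarrow> int). finite F \<and> F \<subseteq> B \<and>
         (\<forall>x. (\<Sum>f\<in>F. of_int (c f) * f x) = 0) \<longrightarrow> (\<forall>f\<in>F. c f = 0)) \<and>
     (\<forall>d\<in>dualZ G. \<exists>F (c :: ((real ^ 'n) \<Rightarrow> real) \<Rightarrow> int). finite F \<and> F \<subseteq> B \<and>
         d = (\<lambda>x. \<Sum>f\<in>F. of_int (c f) * f x)))"

definition restr :: "(real ^ 'n) set \<Rightarrow> (real ^ 'n) \<Rightarrow> ((real ^ 'n) \<Rightarrow> real)" where
  "restr G v = (\<lambda>x. if x \<in> ZG G then v \<bullet> x else 0)"

definition a_set :: "(real ^ 'n) set \<Rightarrow> ((real ^ 'n) \<Rightarrow> real ^ 'n) \<Rightarrow> (real ^ 'n) \<Rightarrow> ((real ^ 'n) \<Rightarrow> real) set" where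
  "a_set G cor a = {d \<in> dualZ G. d a = 1 \<and>
      (d \<in> EG G \<or> (\<lambda>x. restr G (cor a) x - d x) \<in> EG G)}"

end

theory Submission
  imports Defs
begin


definition rv :: "real^'n \<Rightarrow> bool" where "rv v \<longleftrightarrow> (\<forall>i. v $ i \<in> \<rat>)"

lemma inner_vec_sum: "(v::real^'n) \<bullet> w = (\<Sum>i\<in>UNIV. v $ i * w $ i)"
  by (simp add: inner_vec_def)

lemma rv_inner: "rv v \<Longrightarrow> rv w \<Longrightarrow> v \<bullet> w \<in> \<rat>"
  unfolding inner_vec_sum rv_def by (intro Rats_sum Rats_mult) auto

lemma lattice_rv: "x \<in> lattice \<Longrightarrow> rv x"
  unfolding lattice_def rv_def using Ints_subset_Rats by blast

lemma rv_add: "rv v \<Longrightarrow> rv w \<Longrightarrow> rv (v + w)" unfolding rv_def by auto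
lemma rv_diff: "rv v \<Longrightarrow> rv w \<Longrightarrow> rv (v - w)" unfolding rv_def by auto
lemma rv_scale: "c \<in> \<rat> \<Longrightarrow> rv w \<Longrightarrow> rv (c *\<^sub>R w)" unfolding rv_def by auto
lemma rv_zero: "rv 0" unfolding rv_def by auto
lemma rv_axis: "rv (axis i 1)" unfolding rv_def axis_def by auto

lemma rat_perp_span:
  fixes A :: "(real^'n) set"
  assumes "finite A" "\<forall>a\<in>A. rv a"
  shows "{w. \<forall>a\<in>A. a \<bullet> w = 0} \<subseteq> span {w. rv w \<and> (\<forall>a\<in>A. a \<bullet> w = 0)}"
  using assms
proof (induction A rule: finite_induct)
  case empty
  have "UNIV \<subseteq> span {w::real^'n. rv w}"
  proof -
    have "(Basis :: (real^'n) set) \<subseteq> {w. rv w}"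
      unfolding Basis_vec_def using rv_axis by auto
    hence "span (Basis :: (real^'n) set) \<subseteq> span {w. rv w}" by (rule span_mono)
    thus ?thesis by simp
  qed
  then show ?case by simp
next
  case (insert a A)
  let ?W = "{w. rv w \<and> (\<forall>a\<in>A. a \<bullet> w = 0)}"
  let ?W' = "{w. rv w \<and> (\<forall>b\<in>insert a A. b \<bullet> w = 0)}"
  have IH: "{w. \<forall>a\<in>A. a \<bullet> w = 0} \<subseteq> span ?W" using insert by auto
  have ra: "rv a" using insert by auto
  show ?case
  proof (cases "\<exists>r0\<in>?W. a \<bullet> r0 \<noteq> 0")
    case False
    hence "?W \<subseteq> ?W'" by auto
    hence "span ?W \<subseteq> span ?W'" by (rule span_mono)
    then show ?thesis using IH by auto
  next
    case True
    then obtain r0 where r0: "r0 \<in> ?W" "a \<bullet> r0 \<noteq> 0" by blast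
    define P where "P = (\<lambda>r. r - ((a \<bullet> r) / (a \<bullet> r0)) *\<^sub>R r0)"
    have linP: "linear P" unfolding P_def
      by (rule linearI) (simp_all add: inner_add_right algebra_simps add_divide_distrib scaleR_add_left)
    have PW: "P ` ?W \<subseteq> ?W'"
    proof
      fix y assume "y \<in> P ` ?W"
      then obtain r where r: "r \<in> ?W" "y = P r" by blast
      have "rv y" unfolding r P_def using r r0 ra
        by (intro rv_diff rv_scale) (auto intro!: Rats_divide rv_inner)
      moreover have "a \<bullet> y = 0" unfolding r P_def using r0 by (simp add: inner_diff_right)
      moreover have "\<forall>b\<in>A. b \<bullet> y = 0" unfolding r P_def using r r0 by (simp add: inner_diff_right)
      ultimately show "y \<in> ?W'" by auto
    qed
    show ?thesis
    proof
      fix w assume w: "w \<in> {w. \<forall>b\<in>insert a A. b \<bullet> w = 0}"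
      hence "w \<in> span ?W" using IH by auto
      hence "P w \<in> P ` span ?W" by blast
      also have "\<dots> = span (P ` ?W)" by (rule span_linear_image[OF linP, symmetric])
      also have "\<dots> \<subseteq> span ?W'" by (rule span_mono[OF PW])
      finally show "w \<in> span ?W'" using w unfolding P_def by simp
    qed
  qed
qed


lemma rv_sum: "finite A \<Longrightarrow> (\<And>x. x \<in> A \<Longrightarrow> rv (f x)) \<Longrightarrow> rv (\<Sum>x\<in>A. f x)"
  by (induction A rule: finite_induct) (auto intro: rv_add rv_zero)

lemma common_denom:
  assumes "finite A" "\<forall>x\<in>A. q x \<in> \<rat>"
  shows "\<exists>N::int. N > 0 \<and> (\<forall>x\<in>A. of_int N * q x \<in> \<int>)"
  using assms
proof (induction A rule: finite_induct)
  case empty then show ?case by (intro exI[of _ 1]) auto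
next
  case (insert a A)
  then obtain N where N: "N > 0" "\<forall>x\<in>A. of_int N * q x \<in> \<int>" by auto
  from insert have "q a \<in> \<rat>" by auto
  then obtain p d where pd: "d > 0" "q a = of_int p / of_int d" by (elim Rats_cases') auto
  have "of_int (N*d) * q x \<in> \<int>" if "x \<in> A" for x
  proof -
    have "of_int (N*d) * q x = of_int d * (of_int N * q x)" by simp
    thus ?thesis using N(2) that by (metis Ints_mult Ints_of_int)
  qed
  moreover have "of_int (N*d) * q a \<in> \<int>" using pd by simp
  ultimately show ?case using N pd by (intro exI[of _ "N*d"]) auto
qed

lemma lattice_add: "x \<in> lattice \<Longrightarrow> y \<in> lattice \<Longrightarrow> x + y \<in> lattice"
  unfolding lattice_def by auto
lemma lattice_int_scale: "x \<in> lattice \<Longrightarrow> of_int m *\<^sub>R x \<in> lattice"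
  unfolding lattice_def by auto
lemma lattice_sum: "finite A \<Longrightarrow> (\<And>x. x \<in> A \<Longrightarrow> f x \<in> lattice) \<Longrightarrow> (\<Sum>x\<in>A. f x) \<in> lattice"
  by (induction A rule: finite_induct) (auto intro: lattice_add simp: lattice_def)

lemma lattice_inner_int: "x \<in> lattice \<Longrightarrow> y \<in> lattice \<Longrightarrow> x \<bullet> y \<in> \<int>"
  unfolding lattice_def inner_vec_sum by (intro Ints_sum Ints_mult) auto

lemma ZG_sub_lattice: "G \<subseteq> lattice \<Longrightarrow> ZG G \<subseteq> lattice"
  unfolding ZG_def by (auto intro!: lattice_sum lattice_int_scale)

lemma G_sub_ZG: "G \<subseteq> ZG G"
  unfolding ZG_def by (auto intro!: exI[of _ "{_}"] exI[of _ "\<lambda>_. 1"])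

lemma ZG_zero: "0 \<in> ZG G"
  unfolding ZG_def by (auto intro!: exI[of _ "{}"])

lemma ZG_add:
  assumes "x \<in> ZG G" "y \<in> ZG G" shows "x + y \<in> ZG G"
proof -
  obtain F c where F: "finite F" "F \<subseteq> G" "x = (\<Sum>g\<in>F. of_int (c g) *\<^sub>R g)" using assms(1) unfolding ZG_def by auto
  obtain F' c' where F': "finite F'" "F' \<subseteq> G" "y = (\<Sum>g\<in>F'. of_int (c' g) *\<^sub>R g)" using assms(2) unfolding ZG_def by auto
  define d where "d g = (if g \<in> F then c g else 0) + (if g \<in> F' then c' g else 0)" for g
  have "x = (\<Sum>g\<in>F\<union>F'. of_int (if g \<in> F then c g else 0) *\<^sub>R g)"
    unfolding F by (rule sum.mono_neutral_cong_left) (use F F' in auto)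
  moreover have "y = (\<Sum>g\<in>F\<union>F'. of_int (if g \<in> F' then c' g else 0) *\<^sub>R g)"
    unfolding F' by (rule sum.mono_neutral_cong_left) (use F F' in auto)
  ultimately have "x + y = (\<Sum>g\<in>F\<union>F'. of_int (d g) *\<^sub>R g)"
    unfolding d_def by (simp add: sum.distrib[symmetric] scaleR_add_left)
  thus ?thesis unfolding ZG_def mem_Collect_eq using F F'
    by (intro exI[of _ "F \<union> F'"] exI[of _ d]) auto
qed

lemma ZG_int_scale:
  assumes "x \<in> ZG G" shows "of_int m *\<^sub>R x \<in> ZG G"
proof -
  obtain F c where F: "finite F" "F \<subseteq> G" "x = (\<Sum>g\<in>F. of_int (c g) *\<^sub>R g)" using assms(1) unfolding ZG_def by auto
  have "of_int m *\<^sub>R x = (\<Sum>g\<in>F. of_int (m * c g) *\<^sub>R g)"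
    unfolding F by (simp add: scaleR_sum_right)
  thus ?thesis unfolding ZG_def mem_Collect_eq using F
    by (intro exI[of _ F] exI[of _ "\<lambda>g. m * c g"]) auto
qed

lemma ZG_neg: "x \<in> ZG G \<Longrightarrow> - x \<in> ZG G"
  using ZG_int_scale[of x G "-1"] by simp

lemma ZG_diff: "x \<in> ZG G \<Longrightarrow> y \<in> ZG G \<Longrightarrow> x - y \<in> ZG G"
  using ZG_add[of x G "-y"] ZG_neg by auto

lemma ZG_sum: "finite A \<Longrightarrow> (\<And>x. x \<in> A \<Longrightarrow> f x \<in> ZG G) \<Longrightarrow> (\<Sum>x\<in>A. f x) \<in> ZG G"
  by (induction A rule: finite_induct) (auto intro: ZG_add ZG_zero)

lemma ZG_sub_span: "ZG G \<subseteq> span G"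
  apply (clarsimp simp: ZG_def)
  apply (rule span_sum)
  apply (rule span_scale)
  apply (rule span_base)
  by auto

lemma hom_add: "f \<in> homQ G \<Longrightarrow> x \<in> ZG G \<Longrightarrow> y \<in> ZG G \<Longrightarrow> f (x + y) = f x + f y"
  unfolding homQ_def by blast

lemma hom_zero: assumes "f \<in> homQ G" shows "f 0 = 0"
proof -
  have "f (0 + 0) = f 0 + f 0" by (rule hom_add[OF assms ZG_zero ZG_zero])
  thus ?thesis by simp
qed

lemma hom_neg: "f \<in> homQ G \<Longrightarrow> x \<in> ZG G \<Longrightarrow> f (- x) = - f x"
proof -
  assume a: "f \<in> homQ G" "x \<in> ZG G"
  have "f (x + - x) = f x + f (- x)" by (rule hom_add[OF a(1) a(2) ZG_neg[OF a(2)]])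
  thus ?thesis using hom_zero[OF a(1)] by simp
qed

lemma hom_nat: "f \<in> homQ G \<Longrightarrow> x \<in> ZG G \<Longrightarrow> f (of_nat m *\<^sub>R x) = of_nat m * f x"
proof (induction m)
  case 0 then show ?case using hom_zero by simp
next
  case (Suc m)
  have "of_nat (Suc m) *\<^sub>R x = x + of_nat m *\<^sub>R x" by (simp add: algebra_simps)
  moreover have "of_nat m *\<^sub>R x \<in> ZG G" using ZG_int_scale[OF Suc(3), of "int m"] by simp
  ultimately have "f (of_nat (Suc m) *\<^sub>R x) = f x + f (of_nat m *\<^sub>R x)"
    using hom_add[OF Suc(2,3)] by simp
  thus ?case using Suc by (simp add: algebra_simps)
qed

lemma hom_int: assumes a: "f \<in> homQ G" "x \<in> ZG G" shows "f (of_int m *\<^sub>R x) = of_int m * f x"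
proof (cases "m \<ge> 0")
  case True
  define k where "k = nat m"
  have "m = int k" using True unfolding k_def by simp
  then show ?thesis using hom_nat a by simp
next
  case False
  define k where "k = nat (- m)"
  have k: "m = - int k" using False unfolding k_def by simp
  have "f (of_int m *\<^sub>R x) = f (- (of_nat k *\<^sub>R x))" using k by simp
  also have "\<dots> = - f (of_nat k *\<^sub>R x)" using hom_neg[OF a(1)] ZG_int_scale[OF a(2), of "int k"] by simp
  finally show ?thesis using hom_nat[OF a] k by simp
qed

lemma hom_sum:
  assumes "f \<in> homQ G" "finite B" "B \<subseteq> ZG G"
  shows "f (\<Sum>b\<in>B. of_int (m b) *\<^sub>R b) = (\<Sum>b\<in>B. of_int (m b) * f b)"
  using assms(2,3)
proof (induction B rule: finite_induct)
  case empty then show ?case using hom_zero[OF assms(1)] by simp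
next
  case (insert b B)
  have s1: "(\<Sum>b\<in>B. of_int (m b) *\<^sub>R b) \<in> ZG G" using insert by (auto intro!: ZG_sum ZG_int_scale)
  have s2: "of_int (m b) *\<^sub>R b \<in> ZG G" using insert by (auto intro!: ZG_int_scale)
  have e1: "f (of_int (m b) *\<^sub>R b + (\<Sum>b\<in>B. of_int (m b) *\<^sub>R b)) = f (of_int (m b) *\<^sub>R b) + f (\<Sum>b\<in>B. of_int (m b) *\<^sub>R b)"
    by (rule hom_add[OF assms(1) s2 s1])
  have e2: "f (of_int (m b) *\<^sub>R b) = of_int (m b) * f b" using hom_int[OF assms(1)] insert by auto
  have e3: "f (\<Sum>b\<in>B. of_int (m b) *\<^sub>R b) = (\<Sum>b\<in>B. of_int (m b) * f b)" using insert by auto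
  show ?case using insert(1,2) e1 e2 e3 by (simp add: sum.insert)
qed

lemma restr_homQ:
  assumes "rv v" "G \<subseteq> lattice"
  shows "restr G v \<in> homQ G"
proof -
  have L: "ZG G \<subseteq> lattice" using ZG_sub_lattice[OF assms(2)] .
  have 1: "\<forall>x\<in>ZG G. restr G v x \<in> \<rat>"
    using L assms(1) by (auto simp: restr_def intro!: rv_inner lattice_rv)
  have 2: "\<forall>x\<in>ZG G. \<forall>y\<in>ZG G. restr G v (x + y) = restr G v x + restr G v y"
    using ZG_add by (auto simp: restr_def inner_add_right)
  have 3: "\<forall>x. x \<notin> ZG G \<longrightarrow> restr G v x = 0" by (simp add: restr_def)
  show ?thesis unfolding homQ_def using 1 2 3 by blast
qed

lemma in_span_inner_zero:
  assumes "x \<in> span A" "\<forall>a\<in>A. v \<bullet> a = 0" shows "v \<bullet> x = 0"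
proof -
  have "span A \<subseteq> {x. v \<bullet> x = 0}" using assms(2) by (intro span_minimal subspace_hyperplane) auto
  thus ?thesis using assms(1) by auto
qed

lemma dual_vec:
  fixes B :: "(real^'n) set"
  assumes "finite B" "B \<subseteq> lattice" "independent B" "b \<in> B"
  shows "\<exists>w. rv w \<and> (\<forall>b'\<in>B-{b}. b' \<bullet> w = 0) \<and> w \<bullet> b = 1"
proof -
  obtain y z where yz: "y \<in> span (B - {b})" "\<And>w. w \<in> span (B - {b}) \<Longrightarrow> orthogonal z w" "b = y + z"
    by (rule orthogonal_subspace_decomp_exists[of "B - {b}" b]) blast
  have "z \<noteq> 0" using yz assms(3,4) unfolding dependent_def by auto
  have zy: "z \<bullet> y = 0" using yz(2)[OF yz(1)] unfolding orthogonal_def by simp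
  have zb: "z \<bullet> b \<noteq> 0" using yz(3) zy \<open>z \<noteq> 0\<close> by (simp add: inner_add_right)
  have zW: "z \<in> {w. \<forall>a\<in>B-{b}. a \<bullet> w = 0}" using yz(2) by (auto simp: orthogonal_def inner_commute span_base)
  have "finite (B - {b})" "\<forall>a\<in>B-{b}. rv a" using assms lattice_rv by auto
  from rat_perp_span[OF this] zW have zs: "z \<in> span {w. rv w \<and> (\<forall>a\<in>B-{b}. a \<bullet> w = 0)}" by auto
  have "\<exists>r. rv r \<and> (\<forall>a\<in>B-{b}. a \<bullet> r = 0) \<and> b \<bullet> r \<noteq> 0"
  proof (rule ccontr)
    assume "\<not> ?thesis"
    hence "\<forall>r\<in>{w. rv w \<and> (\<forall>a\<in>B-{b}. a \<bullet> w = 0)}. b \<bullet> r = 0" by auto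
    from in_span_inner_zero[OF zs this] zb show False by (simp add: inner_commute)
  qed
  then obtain r where r: "rv r" "\<forall>a\<in>B-{b}. a \<bullet> r = 0" "b \<bullet> r \<noteq> 0" by auto
  have "rv b" using assms lattice_rv by auto
  hence "b \<bullet> r \<in> \<rat>" using r rv_inner by auto
  show ?thesis using r \<open>b \<bullet> r \<in> \<rat>\<close>
    by (intro exI[of _ "(1 / (b \<bullet> r)) *\<^sub>R r"]) (auto intro!: rv_scale simp: inner_commute)
qed


locale ctx =
  fixes G H :: "(real^'n) set"
  assumes Hfin: "finite H"
    and Gdef: "G = {x. \<exists>c::(real^'n)\<Rightarrow>nat. x = (\<Sum>h\<in>H. of_nat (c h) *\<^sub>R h)}"
    and Glat: "G \<subseteq> lattice"
    and spanL: "span (ZG G) = UNIV"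
begin

lemma L_lat: "ZG G \<subseteq> lattice" using ZG_sub_lattice[OF Glat] .

lemma H_sub_G: "H \<subseteq> G"
proof
  fix h assume h: "h \<in> H"
  have "(\<Sum>h'\<in>H. of_nat (if h' = h then 1 else 0) *\<^sub>R h') = h"
    using h Hfin by (simp add: if_distrib[of "\<lambda>t. of_nat t *\<^sub>R _"] sum.delta cong: if_cong)
  thus "h \<in> G" unfolding Gdef by (intro CollectI exI[of _ "\<lambda>h'. if h' = h then 1 else 0"]) simp
qed

lemma G_span_H: "G \<subseteq> span H"
  apply (clarsimp simp: Gdef)
  apply (rule span_sum)
  apply (rule span_scale)
  apply (rule span_base)
  by auto

lemma span_G: "span G = UNIV"
  using spanL ZG_sub_span[of G] span_mono[of "ZG G" "span G"] by (auto simp: span_span)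

lemma span_H: "span H = UNIV"
  using span_G G_span_H span_mono[of G "span H"] by (auto simp: span_span)

lemma vec_zero_on_L: assumes "\<forall>x\<in>ZG G. v \<bullet> x = 0" shows "v = 0"
proof -
  have "v \<bullet> v = 0" using in_span_inner_zero[of v "ZG G" v] assms spanL by auto
  thus ?thesis by simp
qed

lemma vec_zero_on_H: assumes "\<forall>x\<in>H. v \<bullet> x = 0" shows "v = 0"
proof -
  have "v \<bullet> v = 0" using in_span_inner_zero[of v H v] assms span_H by auto
  thus ?thesis by simp
qed

lemma restr_inj: assumes "restr G v = restr G w" shows "v = w"
proof -
  have "\<forall>x\<in>ZG G. (v - w) \<bullet> x = 0"
  proof
    fix x assume "x \<in> ZG G"
    hence "v \<bullet> x = w \<bullet> x" using fun_cong[OF assms, of x] by (simp add: restr_def)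
    thus "(v - w) \<bullet> x = 0" by (simp add: inner_diff_left)
  qed
  thus ?thesis using vec_zero_on_L[of "v - w"] by auto
qed

lemma rep_homQ:
  assumes f: "f \<in> homQ G"
  shows "\<exists>v. rv v \<and> f = restr G v"
proof -
  obtain B where B: "B \<subseteq> ZG G" "independent B" "ZG G \<subseteq> span B" "card B = dim (ZG G)"
    by (rule basis_exists)
  have finB: "finite B" using B(2) by (simp add: finiteI_independent)
  have Blat: "B \<subseteq> lattice" using B(1) L_lat by auto
  have "\<forall>b\<in>B. \<exists>w. rv w \<and> (\<forall>b'\<in>B-{b}. b' \<bullet> w = 0) \<and> w \<bullet> b = 1"
    using dual_vec[OF finB Blat B(2)] by blast
  then obtain W where W: "\<And>b. b \<in> B \<Longrightarrow> rv (W b) \<and> (\<forall>b'\<in>B-{b}. b' \<bullet> W b = 0) \<and> W b \<bullet> b = 1"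
    by metis
  define v where "v = (\<Sum>b\<in>B. f b *\<^sub>R W b)"
  have fQ: "f b \<in> \<rat>" if "b \<in> B" for b using f B(1) that unfolding homQ_def by auto
  have rvv: "rv v" unfolding v_def using finB W fQ by (intro rv_sum rv_scale) auto
  have "f x = v \<bullet> x" if x: "x \<in> ZG G" for x
  proof -
    have "x \<in> span B" using x B(3) by auto
    then obtain r where r: "x = (\<Sum>b\<in>B. r b *\<^sub>R b)" using span_finite[OF finB] by auto
    have coord: "W b \<bullet> x = r b" if "b \<in> B" for b
    proof -
      have "W b \<bullet> x = (\<Sum>b'\<in>B. r b' * (W b \<bullet> b'))" unfolding r by (simp add: inner_sum_right)
      also have "\<dots> = (\<Sum>b'\<in>B. if b' = b then r b' else 0)"
        using W[OF that] by (intro sum.cong) (auto simp: inner_commute)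
      also have "\<dots> = r b" using finB that by simp
      finally show ?thesis .
    qed
    have rQ: "\<forall>b\<in>B. r b \<in> \<rat>"
    proof
      fix b assume "b \<in> B"
      have "rv x" using x L_lat lattice_rv by auto
      thus "r b \<in> \<rat>" using coord[OF \<open>b \<in> B\<close>] W[OF \<open>b \<in> B\<close>] rv_inner by metis
    qed
    obtain N :: int where N: "N > 0" "\<forall>b\<in>B. of_int N * r b \<in> \<int>" using common_denom[OF finB rQ] by auto
    have "\<forall>b\<in>B. \<exists>m::int. of_int N * r b = of_int m" using N(2) Ints_cases by metis
    then obtain m where m: "\<And>b. b \<in> B \<Longrightarrow> of_int N * r b = of_int (m b)" by metis
    have Nx: "of_int N *\<^sub>R x = (\<Sum>b\<in>B. of_int (m b) *\<^sub>R b)"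
      unfolding r scaleR_sum_right using m by (intro sum.cong) auto
    have "of_int N * f x = f (of_int N *\<^sub>R x)" using hom_int[OF f x] by simp
    also have "\<dots> = (\<Sum>b\<in>B. of_int (m b) * f b)" unfolding Nx by (rule hom_sum[OF f finB B(1)])
    also have "\<dots> = (\<Sum>b\<in>B. of_int N * (f b * (W b \<bullet> x)))"
      using m coord by (intro sum.cong) auto
    also have "\<dots> = of_int N * (v \<bullet> x)"
      unfolding v_def by (simp add: inner_sum_left sum_distrib_left)
    finally show ?thesis using N(1) by simp
  qed
  moreover have "f x = 0" if "x \<notin> ZG G" for x using f that unfolding homQ_def by auto
  ultimately have "f = restr G v" unfolding restr_def by auto
  thus ?thesis using rvv by auto
qed

end


lemma kernel_lemma:
  fixes p q :: "real^'n"
  assumes "\<forall>x. q \<bullet> x = 0 \<longrightarrow> p \<bullet> x = 0"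
  shows "\<exists>l. p = l *\<^sub>R q"
proof (cases "q = 0")
  case True
  hence "p \<bullet> p = 0" using assms by auto
  thus ?thesis using True by auto
next
  case False
  define l where "l = (p \<bullet> q) / (q \<bullet> q)"
  define r where "r = p - l *\<^sub>R q"
  have "q \<bullet> q \<noteq> 0" using False by simp
  hence rq: "q \<bullet> r = 0" unfolding r_def l_def by (simp add: inner_diff_right inner_commute)
  hence "p \<bullet> r = 0" using assms by auto
  hence "r \<bullet> r = 0" using rq unfolding r_def by (simp add: inner_diff_left inner_commute)
  hence "r = 0" by simp
  thus ?thesis unfolding r_def by (intro exI[of _ l]) simp
qed

lemma restr_scale: "restr G (c *\<^sub>R v) = (\<lambda>x. c * restr G v x)"
  unfolding restr_def by auto

lemma restr_add: "restr G (v + w) = (\<lambda>x. restr G v x + restr G w x)"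
  unfolding restr_def by (auto simp: inner_add_left)

lemma restr_diff: "restr G (v - w) = (\<lambda>x. restr G v x - restr G w x)"
  unfolding restr_def by (auto simp: inner_diff_left)

context ctx begin

definition Dv :: "real^'n \<Rightarrow> bool" where "Dv v \<longleftrightarrow> (\<forall>g\<in>G. 0 \<le> v \<bullet> g)"
definition Hp :: "real^'n \<Rightarrow> (real^'n) set" where "Hp v = {h\<in>H. 0 < v \<bullet> h}"
definition H0 :: "real^'n \<Rightarrow> (real^'n) set" where "H0 v = {h\<in>H. v \<bullet> h = 0}"

lemma G_sub_L: "G \<subseteq> ZG G" by (rule G_sub_ZG)
lemma H_sub_L: "H \<subseteq> ZG G" using H_sub_G G_sub_L by auto

lemma Dv_H: "Dv v \<longleftrightarrow> (\<forall>h\<in>H. 0 \<le> v \<bullet> h)"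
proof
  assume "Dv v" thus "\<forall>h\<in>H. 0 \<le> v \<bullet> h" using H_sub_G unfolding Dv_def by auto
next
  assume a: "\<forall>h\<in>H. 0 \<le> v \<bullet> h"
  show "Dv v" unfolding Dv_def
  proof
    fix g assume "g \<in> G"
    then obtain c :: "real^'n \<Rightarrow> nat" where c: "g = (\<Sum>h\<in>H. of_nat (c h) *\<^sub>R h)" unfolding Gdef by auto
    show "0 \<le> v \<bullet> g"
      using a unfolding c by (simp add: inner_sum_right sum_nonneg)
  qed
qed

lemma H0_sub: "H0 v \<subseteq> H" unfolding H0_def by auto
lemma finite_H0: "finite (H0 v)" using Hfin H0_sub finite_subset by metis
lemma finite_Hp: "finite (Hp v)" using Hfin unfolding Hp_def by auto

lemma G_sub_QG: "G \<subseteq> QG G"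
  unfolding QG_def by (auto intro!: exI[of _ "{_}"] exI[of _ "\<lambda>_. 1"])

lemma QG_nonneg: assumes "Dv v" "x \<in> QG G" shows "0 \<le> v \<bullet> x"
proof -
  obtain F c where F: "finite F" "F \<subseteq> G" "\<forall>g\<in>F. c g \<in> \<rat> \<and> c g \<ge> 0" "x = (\<Sum>g\<in>F. c g *\<^sub>R g)"
    using assms(2) unfolding QG_def by auto
  have "v \<bullet> x = (\<Sum>g\<in>F. c g * (v \<bullet> g))" unfolding F(4) by (simp add: inner_sum_right)
  also have "\<dots> \<ge> 0" using F assms(1) unfolding Dv_def by (intro sum_nonneg mult_nonneg_nonneg) auto
  finally show ?thesis .
qed

lemma QG_sub_span: "QG G \<subseteq> span G"
  apply (clarsimp simp: QG_def)
  apply (rule span_sum)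
  apply (rule span_scale)
  apply (rule span_base)
  by auto

lemma span_QG: "span (QG G) = UNIV"
  using span_G G_sub_QG span_mono[of G "QG G"] by auto

lemma dim_QG: "dim (QG G) = CARD('n)"
  using span_QG dim_eq_full[of "QG G"] by simp

lemma G0_span: assumes "Dv v" "g \<in> G" "v \<bullet> g = 0" shows "g \<in> span (H0 v)"
proof -
  obtain c :: "real^'n \<Rightarrow> nat" where c: "g = (\<Sum>h\<in>H. of_nat (c h) *\<^sub>R h)" using assms(2) unfolding Gdef by auto
  have nn: "\<And>h. h \<in> H \<Longrightarrow> 0 \<le> of_nat (c h) * (v \<bullet> h)" using assms(1) Dv_H by auto
  have "(\<Sum>h\<in>H. of_nat (c h) * (v \<bullet> h)) = 0" using assms(3) unfolding c by (simp add: inner_sum_right)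
  hence z: "\<forall>h\<in>H. of_nat (c h) * (v \<bullet> h) = 0"
    using sum_nonneg_eq_0_iff[of H "\<lambda>h. of_nat (c h) * (v \<bullet> h)"] Hfin nn by simp
  show ?thesis unfolding c
  proof (rule span_sum)
    fix h assume h: "h \<in> H"
    show "of_nat (c h) *\<^sub>R h \<in> span (H0 v)"
    proof (cases "c h = 0")
      case True thus ?thesis by (simp add: span_zero)
    next
      case False
      hence "h \<in> H0 v" using z h unfolding H0_def by auto
      thus ?thesis by (intro span_scale span_base)
    qed
  qed
qed

lemma span_face: assumes "Dv v" shows "span {x \<in> QG G. v \<bullet> x = 0} = span (H0 v)"
proof (rule span_eq[THEN iffD2], rule conjI)
  show "H0 v \<subseteq> span {x \<in> QG G. v \<bullet> x = 0}"
    using H_sub_G G_sub_QG unfolding H0_def by (auto intro: span_base)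
  show "{x \<in> QG G. v \<bullet> x = 0} \<subseteq> span (H0 v)"
  proof clarify
    fix x assume x: "x \<in> QG G" "v \<bullet> x = 0"
    obtain F c where F: "finite F" "F \<subseteq> G" "\<forall>g\<in>F. c g \<in> \<rat> \<and> c g \<ge> 0" "x = (\<Sum>g\<in>F. c g *\<^sub>R g)"
      using x(1) unfolding QG_def by auto
    have nn: "\<And>g. g \<in> F \<Longrightarrow> 0 \<le> c g * (v \<bullet> g)" using F assms unfolding Dv_def by auto
    have "(\<Sum>g\<in>F. c g * (v \<bullet> g)) = 0" using x(2) unfolding F(4) by (simp add: inner_sum_right)
    hence z: "\<forall>g\<in>F. c g * (v \<bullet> g) = 0"
      using sum_nonneg_eq_0_iff[of F "\<lambda>g. c g * (v \<bullet> g)"] F(1) nn by simp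
    show "x \<in> span (H0 v)" unfolding F(4)
    proof (rule span_sum)
      fix g assume g: "g \<in> F"
      show "c g *\<^sub>R g \<in> span (H0 v)"
      proof (cases "c g = 0")
        case True thus ?thesis by (simp add: span_zero)
      next
        case False
        hence "v \<bullet> g = 0" using z g by auto
        thus ?thesis using G0_span[OF assms] F(2) g by (intro span_scale) auto
      qed
    qed
  qed
qed

lemma H0_sub_ker: "span (H0 v) \<subseteq> {x. v \<bullet> x = 0}"
  by (rule span_minimal) (auto simp: H0_def subspace_hyperplane)

lemma dim_ker: assumes "(v::real^'n) \<noteq> 0" shows "dim {x. v \<bullet> x = 0} = CARD('n) - 1"
  using dim_hyperplane[OF assms] by simp

lemma dim_H0_le: assumes "v \<noteq> 0" shows "dim (H0 v) \<le> CARD('n) - 1"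
  using dim_subset[OF H0_sub_ker[of v]] dim_ker[OF assms] by simp

lemma restr_dual_cone: assumes "rv v" "Dv v" shows "restr G v \<in> dual_cone G"
proof -
  have "\<forall>g\<in>G. 0 \<le> restr G v g" using assms(2) G_sub_L unfolding Dv_def restr_def by auto
  thus ?thesis unfolding dual_cone_def using restr_homQ[OF assms(1) Glat] by auto
qed

lemma dual_cone_rep: assumes "f \<in> dual_cone G" shows "\<exists>v. rv v \<and> Dv v \<and> f = restr G v"
proof -
  obtain v where v: "rv v" "f = restr G v" using rep_homQ assms unfolding dual_cone_def by blast
  have "Dv v" unfolding Dv_def
  proof
    fix g assume g: "g \<in> G"
    hence "0 \<le> f g" using assms unfolding dual_cone_def by auto
    moreover have "g \<in> ZG G" using g G_sub_L by auto
    ultimately show "0 \<le> v \<bullet> g" unfolding v(2) restr_def by simp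
  qed
  thus ?thesis using v by auto
qed

lemma restr_nonzero: assumes "v \<noteq> 0" shows "restr G v \<noteq> (\<lambda>_. 0)"
proof
  assume "restr G v = (\<lambda>_. 0)"
  hence "\<forall>x\<in>ZG G. v \<bullet> x = 0" unfolding restr_def by (metis (mono_tags))
  thus False using vec_zero_on_L assms by auto
qed

lemma pos_h: assumes "Dv v" "v \<noteq> 0" shows "\<exists>h\<in>H. 0 < v \<bullet> h"
proof (rule ccontr)
  assume "\<not> ?thesis"
  hence "\<forall>h\<in>H. v \<bullet> h = 0" using assms(1) Dv_H by force
  thus False using vec_zero_on_H assms(2) by auto
qed

lemma prop_from_H0:
  assumes v: "rv v" "Dv v" "v \<noteq> 0" "dim (H0 v) \<ge> CARD('n) - 1"
    and w: "rv w" "Dv w" "\<forall>h\<in>H0 v. w \<bullet> h = 0"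
  shows "\<exists>t. t \<in> \<rat> \<and> t \<ge> 0 \<and> w = t *\<^sub>R v"
proof -
  have eq: "span (H0 v) = {x. v \<bullet> x = 0}"
    using H0_sub_ker[of v] dim_ker[OF v(3)] v(4)
    by (intro subspace_dim_equal) (auto simp: subspace_hyperplane)
  have "\<forall>x. v \<bullet> x = 0 \<longrightarrow> w \<bullet> x = 0"
  proof (intro allI impI)
    fix x assume "v \<bullet> x = 0"
    hence "x \<in> span (H0 v)" using eq by auto
    from in_span_inner_zero[OF this] w(3) show "w \<bullet> x = 0" by auto
  qed
  then obtain t where t: "w = t *\<^sub>R v" using kernel_lemma by blast
  obtain h where h: "h \<in> H" "0 < v \<bullet> h" using pos_h v by auto
  have hrv: "rv h" using h H_sub_L L_lat lattice_rv by auto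
  have "t = (w \<bullet> h) / (v \<bullet> h)" using t h by simp
  moreover have "w \<bullet> h \<in> \<rat>" "v \<bullet> h \<in> \<rat>" using hrv v w rv_inner by auto
  ultimately have "t \<in> \<rat>" by simp
  moreover have "0 \<le> w \<bullet> h" using w(2) h Dv_H by auto
  hence "t \<ge> 0" using \<open>t = _\<close> h by simp
  ultimately show ?thesis using t by auto
qed

lemma E1:
  assumes v: "rv v" "Dv v" "v \<noteq> 0" "dim (H0 v) \<ge> CARD('n) - 1"
  shows "extremal_ray_gen (dual_cone G) (restr G v)"
  unfolding extremal_ray_gen_def
proof (intro conjI ballI impI)
  show "restr G v \<in> dual_cone G" using restr_dual_cone v by auto
  show "restr G v \<noteq> (\<lambda>_. 0)" using restr_nonzero v by auto
  fix a b assume ab: "a \<in> dual_cone G" "b \<in> dual_cone G" "restr G v = (\<lambda>x. a x + b x)"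
  obtain va where va: "rv va" "Dv va" "a = restr G va" using dual_cone_rep ab by blast
  obtain vb where vb: "rv vb" "Dv vb" "b = restr G vb" using dual_cone_rep ab by blast
  have z: "va \<bullet> h = 0 \<and> vb \<bullet> h = 0" if "h \<in> H0 v" for h
  proof -
    have hL: "h \<in> ZG G" "h \<in> H" using that H0_sub H_sub_L by auto
    have "v \<bullet> h = va \<bullet> h + vb \<bullet> h" using fun_cong[OF ab(3), of h] hL unfolding va vb restr_def by simp
    moreover have "v \<bullet> h = 0" using that unfolding H0_def by auto
    moreover have "0 \<le> va \<bullet> h" "0 \<le> vb \<bullet> h" using va vb hL Dv_H by auto
    ultimately show ?thesis by linarith
  qed
  obtain ta where ta: "ta \<in> \<rat>" "ta \<ge> 0" "va = ta *\<^sub>R v" using prop_from_H0[OF v va(1,2)] z by blast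
  obtain tb where tb: "tb \<in> \<rat>" "tb \<ge> 0" "vb = tb *\<^sub>R v" using prop_from_H0[OF v vb(1,2)] z by blast
  show "\<exists>t. t \<in> \<rat> \<and> 0 \<le> t \<and> a = (\<lambda>x. t * restr G v x)"
    using ta unfolding va(3) by (intro exI[of _ ta]) (simp add: restr_scale)
  show "\<exists>t. t \<in> \<rat> \<and> 0 \<le> t \<and> b = (\<lambda>x. t * restr G v x)"
    using tb unfolding vb(3) by (intro exI[of _ tb]) (simp add: restr_scale)
qed

end


context ctx begin

lemma H_rv: "h \<in> H \<Longrightarrow> rv h" using H_sub_L L_lat lattice_rv by auto

lemma exists_u:
  assumes v: "rv v" "v \<noteq> 0" "dim (H0 v) < CARD('n) - 1"
  shows "\<exists>u. rv u \<and> (\<forall>h\<in>H0 v. u \<bullet> h = 0) \<and> (\<forall>t. u \<noteq> t *\<^sub>R v)"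
proof (rule ccontr)
  assume na: "\<not> ?thesis"
  let ?W = "{w. \<forall>a\<in>H0 v. a \<bullet> w = 0}"
  let ?R = "{w. rv w \<and> (\<forall>a\<in>H0 v. a \<bullet> w = 0)}"
  have "\<forall>a\<in>H0 v. rv a" using H0_sub H_rv by auto
  from rat_perp_span[OF finite_H0 this] have WR: "?W \<subseteq> span ?R" .
  have "?R \<subseteq> span {v}"
  proof
    fix r assume r: "r \<in> ?R"
    hence "rv r" "\<forall>h\<in>H0 v. r \<bullet> h = 0" by (auto simp: inner_commute)
    then obtain t where "r = t *\<^sub>R v" using na by blast
    thus "r \<in> span {v}" by (simp add: span_base span_scale)
  qed
  hence "span ?R \<subseteq> span {v}" using span_mono[of ?R "span {v}"] by (simp add: span_span)
  hence Wv: "?W \<subseteq> span {v}" using WR by auto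
  have "{x. v \<bullet> x = 0} \<subseteq> span (H0 v)"
  proof
    fix x assume x: "x \<in> {x. v \<bullet> x = 0}"
    obtain y z where yz: "y \<in> span (H0 v)" "\<And>w. w \<in> span (H0 v) \<Longrightarrow> orthogonal z w" "x = y + z"
      by (rule orthogonal_subspace_decomp_exists[of "H0 v" x]) blast
    have "z \<in> ?W" using yz(2) by (auto simp: orthogonal_def inner_commute span_base)
    hence "z \<in> span {v}" using Wv by auto
    then obtain k where k: "z = k *\<^sub>R v" by (auto simp: span_singleton)
    have "v \<bullet> y = 0" using H0_sub_ker[of v] yz(1) by auto
    hence "k * (v \<bullet> v) = 0" using x yz(3) k by (simp add: inner_add_right)
    hence "k = 0" using v(2) by simp
    thus "x \<in> span (H0 v)" using yz k by simp
  qed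
  from dim_subset[OF this] have "dim {x. v \<bullet> x = 0} \<le> dim (H0 v)" by simp
  thus False using dim_ker[OF v(2)] v(3) by simp
qed

lemma split:
  assumes v: "rv v" "Dv v" "v \<noteq> 0" "dim (H0 v) < CARD('n) - 1"
  shows "\<exists>w1 w2. rv w1 \<and> rv w2 \<and> Dv w1 \<and> Dv w2 \<and> v = w1 + w2 \<and> w1 \<noteq> 0 \<and>
     card (Hp w1) < card (Hp v) \<and> card (Hp w2) < card (Hp v) \<and> (\<forall>t. w1 \<noteq> t *\<^sub>R v)"
proof -
  obtain u where u: "rv u" "\<forall>h\<in>H0 v. u \<bullet> h = 0" "\<forall>t. u \<noteq> t *\<^sub>R v" using exists_u[OF v(1,3,4)] by auto
  have vh: "\<And>h. h \<in> H \<Longrightarrow> 0 \<le> v \<bullet> h" using v(2) Dv_H by auto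
  have HpH: "Hp x \<subseteq> H" for x unfolding Hp_def by auto
  have Hpne: "Hp v \<noteq> {}" using pos_h[OF v(2,3)] unfolding Hp_def by auto
  define R1 where "R1 = (\<lambda>h. (u \<bullet> h) / (v \<bullet> h)) ` Hp v"
  have R1: "finite R1" "R1 \<noteq> {}" unfolding R1_def using finite_Hp Hpne by auto
  define c where "c = Min R1"
  obtain h1 where h1: "h1 \<in> Hp v" "c = (u \<bullet> h1) / (v \<bullet> h1)" using Min_in[OF R1] unfolding c_def R1_def by auto
  have cle: "c \<le> (u \<bullet> h) / (v \<bullet> h)" if "h \<in> Hp v" for h
  proof -
    have "(u \<bullet> h) / (v \<bullet> h) \<in> R1" unfolding R1_def using that by auto
    thus ?thesis unfolding c_def using Min_le[OF R1(1)] by auto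
  qed
  have cQ: "c \<in> \<rat>" using h1 u(1) v(1) H_rv[of h1] HpH rv_inner by (auto intro!: Rats_divide)
  define w where "w = u - c *\<^sub>R v"
  have rvw: "rv w" unfolding w_def using u(1) v(1) cQ by (intro rv_diff rv_scale)
  have wH0: "w \<bullet> h = 0" if "h \<in> H0 v" for h
  proof -
    have "u \<bullet> h = 0" "v \<bullet> h = 0" using that u(2) unfolding H0_def by auto
    thus ?thesis unfolding w_def by (simp add: inner_diff_left)
  qed
  have Dvw: "Dv w" unfolding Dv_H
  proof
    fix h assume h: "h \<in> H"
    show "0 \<le> w \<bullet> h"
    proof (cases "0 < v \<bullet> h")
      case True
      hence "h \<in> Hp v" using h unfolding Hp_def by auto
      hence "c * (v \<bullet> h) \<le> u \<bullet> h" using cle True by (simp add: le_divide_eq)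
      thus ?thesis unfolding w_def by (simp add: inner_diff_left)
    next
      case False
      hence "h \<in> H0 v" using vh[OF h] h unfolding H0_def by auto
      thus ?thesis using wH0 by simp
    qed
  qed
  have wh1: "w \<bullet> h1 = 0" using h1 unfolding w_def Hp_def by (simp add: inner_diff_left)
  have wnz: "w \<noteq> 0"
  proof
    assume "w = 0" hence "u = c *\<^sub>R v" unfolding w_def by simp
    thus False using u(3) by auto
  qed
  have Hpw: "Hp w \<subseteq> Hp v - {h1}"
  proof
    fix h assume h: "h \<in> Hp w"
    hence hH: "h \<in> H" "0 < w \<bullet> h" unfolding Hp_def by auto
    have "h \<notin> H0 v" using wH0 hH by auto
    hence "0 < v \<bullet> h" using vh[OF hH(1)] hH unfolding H0_def by auto
    moreover have "h \<noteq> h1" using wh1 hH by auto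
    ultimately show "h \<in> Hp v - {h1}" using hH unfolding Hp_def by auto
  qed
  have Hpwne: "Hp w \<noteq> {}" using pos_h[OF Dvw wnz] unfolding Hp_def by auto
  define R2 where "R2 = (\<lambda>h. (v \<bullet> h) / (w \<bullet> h)) ` Hp w"
  have R2: "finite R2" "R2 \<noteq> {}" unfolding R2_def using finite_Hp Hpwne by auto
  define t where "t = Min R2"
  obtain h2 where h2: "h2 \<in> Hp w" "t = (v \<bullet> h2) / (w \<bullet> h2)" using Min_in[OF R2] unfolding t_def R2_def by auto
  have tle: "t \<le> (v \<bullet> h) / (w \<bullet> h)" if "h \<in> Hp w" for h
  proof -
    have "(v \<bullet> h) / (w \<bullet> h) \<in> R2" unfolding R2_def using that by auto
    thus ?thesis unfolding t_def using Min_le[OF R2(1)] by auto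
  qed
  have h2v: "h2 \<in> Hp v" using h2 Hpw by auto
  have tpos: "t > 0" using h2 h2v unfolding Hp_def by auto
  have tQ: "t \<in> \<rat>" using h2 rvw v(1) H_rv[of h2] HpH rv_inner by (auto intro!: Rats_divide)
  define w1 where "w1 = t *\<^sub>R w"
  define w2 where "w2 = v - t *\<^sub>R w"
  have rv12: "rv w1" "rv w2" unfolding w1_def w2_def using tQ rvw v(1) by (auto intro!: rv_scale rv_diff)
  have Dvw1: "Dv w1" using Dvw tpos unfolding w1_def Dv_def by auto
  have Dvw2: "Dv w2" unfolding Dv_H
  proof
    fix h assume h: "h \<in> H"
    show "0 \<le> w2 \<bullet> h"
    proof (cases "0 < w \<bullet> h")
      case True
      hence "h \<in> Hp w" using h unfolding Hp_def by auto
      hence "t * (w \<bullet> h) \<le> v \<bullet> h" using tle True by (simp add: le_divide_eq)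
      thus ?thesis unfolding w2_def by (simp add: inner_diff_left)
    next
      case False
      hence "w \<bullet> h = 0" using Dvw h Dv_H by force
      thus ?thesis unfolding w2_def using vh[OF h] by (simp add: inner_diff_left)
    qed
  qed
  have "Hp w1 = Hp w" unfolding w1_def Hp_def using tpos by (auto simp: zero_less_mult_iff)
  moreover have "card (Hp w) \<le> card (Hp v - {h1})" using Hpw finite_Hp by (intro card_mono) auto
  moreover have "card (Hp v - {h1}) < card (Hp v)" using h1(1) finite_Hp by (intro card_Diff1_less) auto
  ultimately have c1: "card (Hp w1) < card (Hp v)" by simp
  have "Hp w2 \<subseteq> Hp v - {h2}"
  proof
    fix h assume h: "h \<in> Hp w2"
    hence hH: "h \<in> H" "0 < w2 \<bullet> h" unfolding Hp_def by auto
    have "h \<notin> H0 v"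
    proof
      assume "h \<in> H0 v"
      hence "v \<bullet> h = 0" "w \<bullet> h = 0" using wH0 unfolding H0_def by auto
      thus False using hH unfolding w2_def by (simp add: inner_diff_left)
    qed
    hence "0 < v \<bullet> h" using vh[OF hH(1)] hH unfolding H0_def by auto
    moreover have "w2 \<bullet> h2 = 0" unfolding w2_def using h2 unfolding Hp_def by (simp add: inner_diff_left)
    hence "h \<noteq> h2" using hH by auto
    ultimately show "h \<in> Hp v - {h2}" using hH unfolding Hp_def by auto
  qed
  hence "card (Hp w2) \<le> card (Hp v - {h2})" using finite_Hp by (intro card_mono) auto
  moreover have "card (Hp v - {h2}) < card (Hp v)" using h2v finite_Hp by (intro card_Diff1_less) auto
  ultimately have c2: "card (Hp w2) < card (Hp v)" by linarith
  have np: "\<forall>s. w1 \<noteq> s *\<^sub>R v"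
  proof
    fix s show "w1 \<noteq> s *\<^sub>R v"
    proof
      assume "w1 = s *\<^sub>R v"
      hence "t *\<^sub>R u = (s + t * c) *\<^sub>R v" unfolding w1_def w_def by (simp add: algebra_simps)
      hence "(1/t) *\<^sub>R (t *\<^sub>R u) = (1/t) *\<^sub>R ((s + t * c) *\<^sub>R v)" by simp
      hence "u = ((s + t * c) / t) *\<^sub>R v" using tpos by simp
      thus False using u(3) by auto
    qed
  qed
  have "v = w1 + w2" unfolding w1_def w2_def by simp
  moreover have "w1 \<noteq> 0" unfolding w1_def using tpos wnz by simp
  ultimately show ?thesis using rv12 Dvw1 Dvw2 c1 c2 np by blast
qed

end


lemma homQ_scale:
  assumes "f \<in> homQ G" "t \<in> \<rat>" shows "(\<lambda>x. t * f x) \<in> homQ G"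
  using assms unfolding homQ_def by (auto simp: distrib_left)

lemma dual_cone_scale:
  assumes "f \<in> dual_cone G" "t \<in> \<rat>" "t \<ge> 0" shows "(\<lambda>x. t * f x) \<in> dual_cone G"
  using assms homQ_scale unfolding dual_cone_def by auto

lemma ext_dec:
  assumes "extremal_ray_gen K v" "a \<in> K" "b \<in> K" "v = (\<lambda>x. a x + b x)"
  shows "(\<exists>t. t \<in> \<rat> \<and> t \<ge> 0 \<and> a = (\<lambda>x. t * v x)) \<and> (\<exists>t. t \<in> \<rat> \<and> t \<ge> 0 \<and> b = (\<lambda>x. t * v x))"
proof -
  have H: "\<forall>a\<in>K. \<forall>b\<in>K. v = (\<lambda>x. a x + b x) \<longrightarrow>
        (\<exists>t. t \<in> \<rat> \<and> t \<ge> 0 \<and> a = (\<lambda>x. t * v x)) \<and> (\<exists>t. t \<in> \<rat> \<and> t \<ge> 0 \<and> b = (\<lambda>x. t * v x))"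
    using assms(1) unfolding extremal_ray_gen_def by (elim conjE)
  show ?thesis using mp[OF bspec[OF bspec[OF H assms(2)] assms(3)] assms(4)] .
qed

lemma ES:
  assumes g: "extremal_ray_gen (dual_cone G) g" and t: "t \<in> \<rat>" "t > 0"
  shows "extremal_ray_gen (dual_cone G) (\<lambda>x. t * g x)"
  unfolding extremal_ray_gen_def
proof (intro conjI ballI impI)
  have "g \<in> dual_cone G" using g unfolding extremal_ray_gen_def by auto
  thus "(\<lambda>x. t * g x) \<in> dual_cone G" using t by (intro dual_cone_scale) auto
  have "g \<noteq> (\<lambda>_. 0)" using g unfolding extremal_ray_gen_def by auto
  then obtain y where "g y \<noteq> 0" by auto
  thus "(\<lambda>x. t * g x) \<noteq> (\<lambda>_. 0)" using t by (auto dest: fun_cong[of _ _ y])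
  fix a b assume ab: "a \<in> dual_cone G" "b \<in> dual_cone G" "(\<lambda>x. t * g x) = (\<lambda>x. a x + b x)"
  have it: "1/t \<in> \<rat>" "1/t \<ge> 0" using t by auto
  have a': "(\<lambda>x. (1/t) * a x) \<in> dual_cone G" "(\<lambda>x. (1/t) * b x) \<in> dual_cone G"
    using dual_cone_scale[OF ab(1) it] dual_cone_scale[OF ab(2) it] by auto
  have "g = (\<lambda>x. (1/t) * a x + (1/t) * b x)"
  proof
    fix x have "t * g x = a x + b x" using fun_cong[OF ab(3), of x] by simp
    thus "g x = (1/t) * a x + (1/t) * b x" using t by (simp add: field_simps)
  qed
  hence ex: "(\<exists>s. s \<in> \<rat> \<and> s \<ge> 0 \<and> (\<lambda>x. (1/t) * a x) = (\<lambda>x. s * g x)) \<and>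
             (\<exists>s. s \<in> \<rat> \<and> s \<ge> 0 \<and> (\<lambda>x. (1/t) * b x) = (\<lambda>x. s * g x))"
    by (rule ext_dec[OF g a'(1) a'(2)])
  show "\<exists>s. s \<in> \<rat> \<and> 0 \<le> s \<and> a = (\<lambda>x. s * (t * g x))"
  proof -
    obtain s where s: "s \<in> \<rat>" "s \<ge> 0" "(\<lambda>x. (1/t) * a x) = (\<lambda>x. s * g x)" using ex by blast
    have "a = (\<lambda>x. s * (t * g x))"
    proof
      fix x have "(1/t) * a x = s * g x" using fun_cong[OF s(3), of x] by simp
      thus "a x = s * (t * g x)" using t by (simp add: field_simps)
    qed
    thus ?thesis using s by auto
  qed
  show "\<exists>s. s \<in> \<rat> \<and> 0 \<le> s \<and> b = (\<lambda>x. s * (t * g x))"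
  proof -
    obtain s where s: "s \<in> \<rat>" "s \<ge> 0" "(\<lambda>x. (1/t) * b x) = (\<lambda>x. s * g x)" using ex by blast
    have "b = (\<lambda>x. s * (t * g x))"
    proof
      fix x have "(1/t) * b x = s * g x" using fun_cong[OF s(3), of x] by simp
      thus "b x = s * (t * g x)" using t by (simp add: field_simps)
    qed
    thus ?thesis using s by auto
  qed
qed

lemma dualZ_neg: "d \<in> dualZ G \<Longrightarrow> (\<lambda>x. - d x) \<in> dualZ G"
  unfolding dualZ_def homQ_def by auto

lemma primitive_neg: assumes "primitive G d" shows "primitive G (\<lambda>x. - d x)"
  unfolding primitive_def
proof (intro conjI ballI allI impI)
  show "(\<lambda>x. - d x) \<in> dualZ G" using assms dualZ_neg unfolding primitive_def by auto
  show "(\<lambda>x. - d x) \<noteq> (\<lambda>_. 0)"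
  proof
    assume "(\<lambda>x. - d x) = (\<lambda>_. 0)"
    hence "\<And>x. - d x = 0" by (rule fun_cong)
    hence "\<And>x. d x = 0" by simp
    hence "d = (\<lambda>_. 0)" by auto
    thus False using assms unfolding primitive_def by auto
  qed
  fix d' k assume d': "d' \<in> dualZ G" "(\<lambda>x. - d x) = (\<lambda>x. of_int k * d' x)"
  have "d = (\<lambda>x. of_int (-k) * d' x)"
  proof
    fix x show "d x = of_int (-k) * d' x" using fun_cong[OF d'(2), of x] by simp
  qed
  moreover have H: "\<forall>d''\<in>dualZ G. \<forall>k. d = (\<lambda>x. of_int k * d'' x) \<longrightarrow> \<bar>k\<bar> = 1"
    using assms unfolding primitive_def by (elim conjE)
  ultimately have "\<bar>-k\<bar> = 1" using bspec[OF H d'(1), rule_format, of "-k"] by simp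
  thus "\<bar>k\<bar> = 1" by simp
qed

lemma PD_aux:
  assumes x0: "x0 \<in> ZG G"
  shows "\<forall>f. f \<in> dualZ G \<and> f x0 \<noteq> 0 \<and> \<bar>f x0\<bar> \<le> real m \<longrightarrow>
           (\<exists>d k. primitive G d \<and> k \<noteq> 0 \<and> f = (\<lambda>x. of_int k * d x))"
proof (induction m)
  case 0 then show ?case by auto
next
  case (Suc m)
  show ?case
  proof (intro allI impI, elim conjE)
    fix f assume f: "f \<in> dualZ G" "f x0 \<noteq> 0" "\<bar>f x0\<bar> \<le> real (Suc m)"
    show "\<exists>d k. primitive G d \<and> k \<noteq> 0 \<and> f = (\<lambda>x. of_int k * d x)"
    proof (cases "primitive G f")
      case True thus ?thesis by (intro exI[of _ f] exI[of _ 1]) auto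
    next
      case False
      have fnz: "f \<noteq> (\<lambda>_. 0)" using f(2) by auto
      then obtain d' k where d': "d' \<in> dualZ G" "f = (\<lambda>x. of_int k * d' x)" "\<bar>k\<bar> \<noteq> 1"
        using False f(1) fnz unfolding primitive_def by auto
      have fx: "f x0 = of_int k * d' x0" using d'(2) by simp
      hence k0: "k \<noteq> 0" and dx0: "d' x0 \<noteq> 0" using f(2) by auto
      have "d' x0 \<in> \<int>" using d'(1) x0 unfolding dualZ_def by auto
      hence d1: "1 \<le> \<bar>d' x0\<bar>" using dx0 by (rule Ints_nonzero_abs_ge1)
      have "\<bar>k\<bar> \<ge> 2" using k0 d'(3) by auto
      hence "real_of_int \<bar>k\<bar> \<ge> 2" by linarith
      hence "2 * \<bar>d' x0\<bar> \<le> real_of_int \<bar>k\<bar> * \<bar>d' x0\<bar>"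
        by (intro mult_right_mono) auto
      hence "\<bar>f x0\<bar> \<ge> 2 * \<bar>d' x0\<bar>" unfolding fx abs_mult by simp
      hence "\<bar>d' x0\<bar> \<le> real m" using f(3) d1 by simp
      then obtain d k' where dk: "primitive G d" "k' \<noteq> 0" "d' = (\<lambda>x. of_int k' * d x)"
        using Suc.IH[rule_format, of d'] d'(1) dx0 by auto
      have "f = (\<lambda>x. of_int (k * k') * d x)" unfolding d'(2) dk(3) by auto
      thus ?thesis using dk k0 by (intro exI[of _ d] exI[of _ "k * k'"]) auto
    qed
  qed
qed

lemma PD:
  assumes "f \<in> dualZ G" "f \<noteq> (\<lambda>_. 0)"
  shows "\<exists>d k. primitive G d \<and> k \<noteq> 0 \<and> f = (\<lambda>x. of_int k * d x)"
proof -
  obtain x0 where fx0: "f x0 \<noteq> 0" using assms(2) by auto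
  have "x0 \<in> ZG G" using assms(1) fx0 unfolding dualZ_def homQ_def by auto
  have "\<bar>f x0\<bar> \<le> real (nat \<lceil>\<bar>f x0\<bar>\<rceil>)" by (rule real_nat_ceiling_ge)
  from PD_aux[OF \<open>x0 \<in> ZG G\<close>, of "nat \<lceil>\<bar>f x0\<bar>\<rceil>", rule_format, of f] show ?thesis
    using assms(1) fx0 \<open>\<bar>f x0\<bar> \<le> _\<close> by auto
qed

context ctx begin

lemma dualZ_homQ: "d \<in> dualZ G \<Longrightarrow> d \<in> homQ G" unfolding dualZ_def by auto

lemma PS:
  assumes v: "rv v" "v \<noteq> 0" "extremal_ray_gen (dual_cone G) (restr G v)"
  shows "\<exists>c. c > 0 \<and> c \<in> \<rat> \<and> restr G (c *\<^sub>R v) \<in> EG G"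
proof -
  have "\<forall>i\<in>UNIV. v $ i \<in> \<rat>" using v(1) unfolding rv_def by auto
  from common_denom[OF finite this] obtain N :: int where N: "N > 0" "\<forall>i. of_int N * v $ i \<in> \<int>" by auto
  define vN where "vN = of_int N *\<^sub>R v"
  have vNl: "vN \<in> lattice" unfolding vN_def lattice_def using N by auto
  have "restr G vN \<in> homQ G" using restr_homQ[OF lattice_rv[OF vNl] Glat] .
  moreover have "\<forall>x\<in>ZG G. restr G vN x \<in> \<int>" using L_lat vNl lattice_inner_int unfolding restr_def by auto
  ultimately have fZ: "restr G vN \<in> dualZ G" unfolding dualZ_def by auto
  have "vN \<noteq> 0" unfolding vN_def using N v(2) by simp
  from PD[OF fZ restr_nonzero[OF this]] obtain d k where dk: "primitive G d" "k \<noteq> 0" "restr G vN = (\<lambda>x. of_int k * d x)"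
    by auto
  have dx: "d x = (of_int N / of_int k) * restr G v x" for x
    using fun_cong[OF dk(3), of x] dk(2) unfolding vN_def restr_scale by (simp add: field_simps)
  show ?thesis
  proof (cases "k > 0")
    case True
    define c where "c = of_int N / (of_int k :: real)"
    have c: "c > 0" "c \<in> \<rat>" unfolding c_def using N True by auto
    have "restr G (c *\<^sub>R v) = d" unfolding restr_scale c_def using dx by auto
    moreover have "extremal_ray_gen (dual_cone G) (restr G (c *\<^sub>R v))"
      unfolding restr_scale using ES[OF v(3) c(2) c(1)] .
    ultimately show ?thesis using c dk(1) unfolding EG_def by auto
  next
    case False
    hence kn: "k < 0" using dk(2) by auto
    define c where "c = - of_int N / (of_int k :: real)"
    have c: "c > 0" "c \<in> \<rat>" unfolding c_def using N kn by (auto simp: divide_pos_neg)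
    have "restr G (c *\<^sub>R v) = (\<lambda>x. - d x)" unfolding restr_scale c_def using dx by auto
    moreover have "extremal_ray_gen (dual_cone G) (restr G (c *\<^sub>R v))"
      unfolding restr_scale using ES[OF v(3) c(2) c(1)] .
    ultimately show ?thesis using c primitive_neg[OF dk(1)] unfolding EG_def by auto
  qed
qed

lemma E2:
  assumes v: "rv v" "Dv v" "v \<noteq> 0" "extremal_ray_gen (dual_cone G) (restr G v)"
  shows "CARD('n) - 1 \<le> dim (H0 v)"
proof (rule ccontr)
  assume "\<not> ?thesis"
  hence "dim (H0 v) < CARD('n) - 1" by simp
  from split[OF v(1-3) this] obtain w1 w2 where w: "rv w1" "rv w2" "Dv w1" "Dv w2" "v = w1 + w2"
    "\<forall>t. w1 \<noteq> t *\<^sub>R v" by blast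
  have "restr G v = (\<lambda>x. restr G w1 x + restr G w2 x)" unfolding w(5) restr_add ..
  moreover have "restr G w1 \<in> dual_cone G" "restr G w2 \<in> dual_cone G" using restr_dual_cone w by auto
  ultimately obtain t where "restr G w1 = (\<lambda>x. t * restr G v x)"
    using ext_dec[OF v(4)] by blast
  hence "restr G w1 = restr G (t *\<^sub>R v)" unfolding restr_scale .
  hence "w1 = t *\<^sub>R v" by (rule restr_inj)
  thus False using w(6) by auto
qed

lemma E_rep:
  assumes "d \<in> EG G"
  shows "\<exists>v. rv v \<and> Dv v \<and> v \<noteq> 0 \<and> d = restr G v \<and> CARD('n) - 1 \<le> dim (H0 v)"
proof -
  have ext: "extremal_ray_gen (dual_cone G) d" using assms unfolding EG_def by auto
  hence "d \<in> dual_cone G" "d \<noteq> (\<lambda>_. 0)" unfolding extremal_ray_gen_def by auto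
  then obtain v where v: "rv v" "Dv v" "d = restr G v" using dual_cone_rep by blast
  have "v \<noteq> 0" using \<open>d \<noteq> _\<close> v(3) unfolding restr_def by auto
  moreover have "CARD('n) - 1 \<le> dim (H0 v)" using E2[OF v(1,2) \<open>v \<noteq> 0\<close>] ext v(3) by auto
  ultimately show ?thesis using v by auto
qed

lemma descent:
  assumes al: "al \<in> ZG G"
  shows "\<forall>v. rv v \<and> Dv v \<and> card (Hp v) \<le> m \<and> v \<bullet> al \<noteq> 0 \<longrightarrow> (\<exists>d\<in>EG G. d al \<noteq> 0)"
proof (induction m)
  case 0
  show ?case
  proof (intro allI impI, elim conjE)
    fix v assume v: "rv v" "Dv v" "card (Hp v) \<le> 0" "v \<bullet> al \<noteq> 0"
    have "v \<noteq> 0" using v(4) by auto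
    from pos_h[OF v(2) this] have "Hp v \<noteq> {}" unfolding Hp_def by auto
    hence "card (Hp v) > 0" using finite_Hp by (simp add: card_gt_0_iff)
    thus "\<exists>d\<in>EG G. d al \<noteq> 0" using v(3) by simp
  qed
next
  case (Suc m)
  show ?case
  proof (intro allI impI, elim conjE)
    fix v assume v: "rv v" "Dv v" "card (Hp v) \<le> Suc m" "v \<bullet> al \<noteq> 0"
    have vnz: "v \<noteq> 0" using v(4) by auto
    show "\<exists>d\<in>EG G. d al \<noteq> 0"
    proof (cases "CARD('n) - 1 \<le> dim (H0 v)")
      case True
      from PS[OF v(1) vnz E1[OF v(1,2) vnz True]] obtain c where c: "c > 0" "restr G (c *\<^sub>R v) \<in> EG G" by auto
      have "restr G (c *\<^sub>R v) al = c * (v \<bullet> al)" using al unfolding restr_def by simp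
      hence "restr G (c *\<^sub>R v) al \<noteq> 0" using c v(4) by simp
      thus ?thesis using c(2) by blast
    next
      case False
      hence "dim (H0 v) < CARD('n) - 1" by simp
      from split[OF v(1,2) vnz this] obtain w1 w2 where w: "rv w1" "rv w2" "Dv w1" "Dv w2" "v = w1 + w2"
        "card (Hp w1) < card (Hp v)" "card (Hp w2) < card (Hp v)" by blast
      have "w1 \<bullet> al + w2 \<bullet> al \<noteq> 0" using v(4) unfolding w(5) by (simp add: inner_add_left)
      hence "w1 \<bullet> al \<noteq> 0 \<or> w2 \<bullet> al \<noteq> 0" by auto
      thus ?thesis
      proof
        assume "w1 \<bullet> al \<noteq> 0"
        moreover have "card (Hp w1) \<le> m" using w(6) v(3) by simp
        ultimately show ?thesis using Suc.IH[rule_format, of w1] w(1,3) by auto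
      next
        assume "w2 \<bullet> al \<noteq> 0"
        moreover have "card (Hp w2) \<le> m" using w(7) v(3) by simp
        ultimately show ?thesis using Suc.IH[rule_format, of w2] w(2,4) by auto
      qed
    qed
  qed
qed

end


lemma basis_unfold:
  fixes G :: "(real^'n) set"
  assumes "part_of_basis G E"
  obtains B where "B \<subseteq> dualZ G" "E \<subseteq> B"
    "\<And>F c. finite F \<Longrightarrow> F \<subseteq> B \<Longrightarrow> (\<forall>x. (\<Sum>f\<in>F. of_int (c f) * f x) = 0) \<Longrightarrow> (\<forall>f\<in>F. c f = 0)"
    "\<And>d. d \<in> dualZ G \<Longrightarrow> \<exists>F c. finite F \<and> F \<subseteq> B \<and> d = (\<lambda>x. \<Sum>f\<in>F. of_int (c f) * f x)"
proof -
  from assms obtain B where B: "B \<subseteq> dualZ G" "E \<subseteq> B"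
    "\<forall>F (c :: ((real ^ 'n) \<Rightarrow> real) \<Rightarrow> int). finite F \<and> F \<subseteq> B \<and>
         (\<forall>x. (\<Sum>f\<in>F. of_int (c f) * f x) = 0) \<longrightarrow> (\<forall>f\<in>F. c f = 0)"
    "\<forall>d\<in>dualZ G. \<exists>F (c :: ((real ^ 'n) \<Rightarrow> real) \<Rightarrow> int). finite F \<and> F \<subseteq> B \<and>
         d = (\<lambda>x. \<Sum>f\<in>F. of_int (c f) * f x)"
    unfolding part_of_basis_def by (elim exE conjE) 
  show ?thesis
  proof (rule that[OF B(1,2)])
    fix F c assume "finite F" "F \<subseteq> B" "\<forall>x. (\<Sum>f\<in>F. of_int (c f) * f x) = 0"
    thus "\<forall>f\<in>F. c f = 0" using B(3) by simp
  next
    fix d assume "d \<in> dualZ G"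
    thus "\<exists>F c. finite F \<and> F \<subseteq> B \<and> d = (\<lambda>x. \<Sum>f\<in>F. of_int (c f) * f x)" using B(4) by simp
  qed
qed

lemma sum_delta_fun:
  assumes "finite F" "d \<in> F"
  shows "(\<Sum>f\<in>F. of_int (if f = d then 1 else 0) * f x) = (d x :: real)"
proof -
  have "(\<Sum>f\<in>F. of_int (if f = d then 1 else 0) * f x) = (\<Sum>f\<in>F. if f = d then d x else 0)"
    by (intro sum.cong) auto
  also have "\<dots> = d x" using assms by simp
  finally show ?thesis .
qed

lemma PB1:
  fixes G :: "(real^'n) set"
  assumes pb: "part_of_basis G E" and d: "d1 \<in> E" "d2 \<in> E" "d1 \<noteq> d2"
    and c0: "c0 \<in> dualZ G" and eq: "(\<lambda>x. of_int k * c0 x) = (\<lambda>x. d1 x + d2 x)"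
  shows "k dvd 1"
proof (rule basis_unfold[OF pb])
  fix B assume B: "B \<subseteq> dualZ G" "E \<subseteq> B"
    "\<And>F c. finite F \<Longrightarrow> F \<subseteq> B \<Longrightarrow> (\<forall>x. (\<Sum>f\<in>F. of_int (c f) * f x) = 0) \<Longrightarrow> (\<forall>f\<in>F. c f = 0)"
    "\<And>d. d \<in> dualZ G \<Longrightarrow> \<exists>F c. finite F \<and> F \<subseteq> B \<and> d = (\<lambda>x. \<Sum>f\<in>F. of_int (c f) * f x)"
  obtain F c where F: "finite F" "F \<subseteq> B" "c0 = (\<lambda>x. \<Sum>f\<in>F. of_int (c f) * f x)" using B(4)[OF c0] by blast
  define F2 where "F2 = F \<union> {d1, d2}"
  have F2: "finite F2" "F2 \<subseteq> B" "d1 \<in> F2" "d2 \<in> F2" "F \<subseteq> F2" unfolding F2_def using F d B(2) by auto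
  define e where "e f = k * (if f \<in> F then c f else 0) - (if f = d1 then 1 else 0) - (if f = d2 then 1 else 0)" for f
  have "\<forall>x. (\<Sum>f\<in>F2. of_int (e f) * f x) = 0"
  proof
    fix x
    have s1: "(\<Sum>f\<in>F2. of_int (if f \<in> F then c f else 0) * f x) = (\<Sum>f\<in>F. of_int (c f) * f x)"
      by (rule sum.mono_neutral_cong_right) (use F2 in auto)
    have pt: "of_int (e f) * f x = of_int k * (of_int (if f \<in> F then c f else 0) * f x)
        - of_int (if f = d1 then 1 else 0) * f x - of_int (if f = d2 then 1 else 0) * f x" for f
      unfolding e_def by (simp only: of_int_diff of_int_mult left_diff_distrib mult.assoc)
    have "(\<Sum>f\<in>F2. of_int (e f) * f x) = (\<Sum>f\<in>F2. of_int k * (of_int (if f \<in> F then c f else 0) * f x)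
        - of_int (if f = d1 then 1 else 0) * f x - of_int (if f = d2 then 1 else 0) * f x)"
      by (rule sum.cong[OF refl pt])
    also have "\<dots> = of_int k * (\<Sum>f\<in>F2. of_int (if f \<in> F then c f else 0) * f x)
        - (\<Sum>f\<in>F2. of_int (if f = d1 then 1 else 0) * f x) - (\<Sum>f\<in>F2. of_int (if f = d2 then 1 else 0) * f x)"
      by (simp only: sum_subtractf sum_distrib_left)
    also have "\<dots> = of_int k * c0 x - d1 x - d2 x" unfolding s1 F(3)
      using sum_delta_fun[OF F2(1) F2(3)] sum_delta_fun[OF F2(1) F2(4)] by simp
    also have "\<dots> = 0" using fun_cong[OF eq, of x] by simp
    finally show "(\<Sum>f\<in>F2. of_int (e f) * f x) = 0" .
  qed
  from B(3)[OF F2(1) F2(2) this] F2(3) have "e d1 = 0" by auto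
  hence "k * (if d1 \<in> F then c d1 else 0) = 1" unfolding e_def using d(3) by auto
  hence "1 = k * (if d1 \<in> F then c d1 else 0)" by simp
  thus ?thesis unfolding dvd_def by blast
qed

lemma PB2:
  fixes G :: "(real^'n) set"
  assumes pb: "part_of_basis G E" and d: "d \<in> E" "d' \<in> E" "d1 \<in> E" "d2 \<in> E"
    and eq: "(\<lambda>x. d x + d' x) = (\<lambda>x. d1 x + d2 x)"
  shows "d \<in> {d1, d2}"
proof (rule basis_unfold[OF pb])
  fix B assume B: "B \<subseteq> dualZ G" "E \<subseteq> B"
    "\<And>F c. finite F \<Longrightarrow> F \<subseteq> B \<Longrightarrow> (\<forall>x. (\<Sum>f\<in>F. of_int (c f) * f x) = 0) \<Longrightarrow> (\<forall>f\<in>F. c f = 0)"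
    "\<And>d. d \<in> dualZ G \<Longrightarrow> \<exists>F c. finite F \<and> F \<subseteq> B \<and> d = (\<lambda>x. \<Sum>f\<in>F. of_int (c f) * f x)"
  show ?thesis
  proof (rule ccontr)
  assume nd: "d \<notin> {d1, d2}"
  define F2 where "F2 = {d, d', d1, d2}"
  have F2: "finite F2" "F2 \<subseteq> B" "d \<in> F2" "d' \<in> F2" "d1 \<in> F2" "d2 \<in> F2" unfolding F2_def using d B(2) by auto
  define e :: "((real^'n) \<Rightarrow> real) \<Rightarrow> int" where
    "e f = (if f = d then 1 else 0) + (if f = d' then 1 else 0) - (if f = d1 then 1 else 0) - (if f = d2 then 1 else 0)" for f
  have "\<forall>x. (\<Sum>f\<in>F2. of_int (e f) * f x) = 0"
  proof
    fix x
    have pt: "of_int (e f) * f x = of_int (if f = d then 1 else 0) * f x + of_int (if f = d' then 1 else 0) * f x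
        - of_int (if f = d1 then 1 else 0) * f x - of_int (if f = d2 then 1 else 0) * f x" for f
      unfolding e_def by (simp only: of_int_diff of_int_add left_diff_distrib distrib_right)
    have "(\<Sum>f\<in>F2. of_int (e f) * f x) = (\<Sum>f\<in>F2. of_int (if f = d then 1 else 0) * f x + of_int (if f = d' then 1 else 0) * f x
        - of_int (if f = d1 then 1 else 0) * f x - of_int (if f = d2 then 1 else 0) * f x)"
      by (rule sum.cong[OF refl pt])
    also have "\<dots> = (\<Sum>f\<in>F2. of_int (if f = d then 1 else 0) * f x)
        + (\<Sum>f\<in>F2. of_int (if f = d' then 1 else 0) * f x)
        - (\<Sum>f\<in>F2. of_int (if f = d1 then 1 else 0) * f x) - (\<Sum>f\<in>F2. of_int (if f = d2 then 1 else 0) * f x)"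
      by (simp only: sum_subtractf sum.distrib)
    also have "\<dots> = d x + d' x - d1 x - d2 x"
      using sum_delta_fun[OF F2(1) F2(3)] sum_delta_fun[OF F2(1) F2(4)]
        sum_delta_fun[OF F2(1) F2(5)] sum_delta_fun[OF F2(1) F2(6)] by simp
    also have "\<dots> = 0" using fun_cong[OF eq, of x] by simp
    finally show "(\<Sum>f\<in>F2. of_int (e f) * f x) = 0" .
  qed
  from B(3)[OF F2(1) F2(2) this] F2(3) have "e d = 0" by auto
  thus False using nd unfolding e_def by (auto split: if_splits)
  qed
qed

lemma prim_unit:
  assumes "primitive G f" "d' \<in> dualZ G" "f = (\<lambda>x. of_int k * d' x)"
  shows "\<bar>k\<bar> = 1"
proof -
  have H: "\<forall>d'\<in>dualZ G. \<forall>k. f = (\<lambda>x. of_int k * d' x) \<longrightarrow> \<bar>k\<bar> = 1"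
    using assms(1) unfolding primitive_def by (elim conjE)
  show ?thesis using bspec[OF H assms(2), rule_format, OF assms(3)] .
qed

lemma PL:
  assumes f: "primitive G f" and g: "primitive G g" and eq: "f = (\<lambda>x. l * g x)" and l: "l \<in> \<rat>"
  shows "l = 1 \<or> l = -1"
proof -
  obtain p q where pq: "q > 0" "coprime p q" "l = of_int p / of_int q" using Rats_cases'[OF l] by blast
  have fZ: "f \<in> dualZ G" and gZ: "g \<in> dualZ G" using f g unfolding primitive_def by auto
  define g' where "g' = (\<lambda>x. (1 / of_int q) * g x)"
  have "g' \<in> homQ G" unfolding g'_def using gZ unfolding dualZ_def by (intro homQ_scale) auto
  moreover have "\<forall>x\<in>ZG G. g' x \<in> \<int>"
  proof
    fix x assume x: "x \<in> ZG G"
    obtain m where m: "g x = of_int m" using gZ x unfolding dualZ_def by (auto elim: Ints_cases)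
    obtain n where n: "f x = of_int n" using fZ x unfolding dualZ_def by (auto elim: Ints_cases)
    have "of_int n = (of_int p / of_int q) * (of_int m :: real)" using fun_cong[OF eq, of x] m n pq(3) by simp
    hence "of_int (q * n) = (of_int (p * m) :: real)" using pq(1) by (simp add: field_simps)
    hence "q * n = p * m" by linarith
    hence "q dvd p * m" unfolding dvd_def by (intro exI[of _ n]) simp
    hence "q dvd m" using pq(2) by (simp add: coprime_commute coprime_dvd_mult_right_iff)
    then obtain r where "m = q * r" by blast
    hence "g' x = of_int r" unfolding g'_def m using pq(1) by simp
    thus "g' x \<in> \<int>" by simp
  qed
  ultimately have g'Z: "g' \<in> dualZ G" unfolding dualZ_def by auto
  have "g = (\<lambda>x. of_int q * g' x)" unfolding g'_def using pq(1) by auto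
  hence "\<bar>q\<bar> = 1" by (rule prim_unit[OF g g'Z])
  hence q1: "q = 1" using pq(1) by simp
  have "f = (\<lambda>x. of_int p * g x)" using eq pq(3) q1 by simp
  hence "\<bar>p\<bar> = 1" by (rule prim_unit[OF f gZ])
  thus ?thesis using pq(3) q1 by (auto simp: abs_if split: if_splits)
qed

lemma refl_inner: "v \<bullet> refl a c y = (v - (v \<bullet> a) *\<^sub>R c) \<bullet> y"
  unfolding refl_def by (simp add: inner_diff_left inner_diff_right inner_commute)

lemma refl_invol: assumes "c \<bullet> a = 2" shows "refl a c (refl a c x) = x"
  unfolding refl_def using assms by (simp add: inner_diff_right algebra_simps)

lemma refl_add: "refl a c (x + y) = refl a c x + refl a c y"
  unfolding refl_def by (simp add: inner_add_right algebra_simps)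

lemma refl_ker:
  assumes "c \<bullet> a = 2"
  shows "refl a c ` {x. v \<bullet> x = 0} = {y. (v - (v \<bullet> a) *\<^sub>R c) \<bullet> y = 0}"
proof
  show "refl a c ` {x. v \<bullet> x = 0} \<subseteq> {y. (v - (v \<bullet> a) *\<^sub>R c) \<bullet> y = 0}"
  proof clarify
    fix x assume "v \<bullet> x = 0"
    moreover have "(v - (v \<bullet> a) *\<^sub>R c) \<bullet> refl a c x = v \<bullet> refl a c (refl a c x)"
      using refl_inner[of v a c "refl a c x"] by simp
    ultimately show "(v - (v \<bullet> a) *\<^sub>R c) \<bullet> refl a c x = 0" using refl_invol[OF assms] by simp
  qed
  show "{y. (v - (v \<bullet> a) *\<^sub>R c) \<bullet> y = 0} \<subseteq> refl a c ` {x. v \<bullet> x = 0}"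
  proof
    fix y assume "y \<in> {y. (v - (v \<bullet> a) *\<^sub>R c) \<bullet> y = 0}"
    hence "v \<bullet> refl a c y = 0" using refl_inner[of v a c y] by simp
    moreover have "y = refl a c (refl a c y)" using refl_invol[OF assms] by simp
    ultimately show "y \<in> refl a c ` {x. v \<bullet> x = 0}" by blast
  qed
qed


context ctx begin

lemma card_pos: "CARD('n) \<ge> 1" by (simp add: Suc_le_eq)

lemma span_H0_ker:
  assumes "v \<noteq> 0" "CARD('n) - 1 \<le> dim (H0 v)"
  shows "span (H0 v) = {x. v \<bullet> x = 0}"
  using H0_sub_ker[of v] dim_ker[OF assms(1)] assms(2)
  by (intro subspace_dim_equal) (auto simp: subspace_hyperplane)

lemma F1:
  assumes v: "rv v" "Dv v" "v \<noteq> 0" "CARD('n) - 1 \<le> dim (H0 v)"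
  shows "is_facet (QG G) {x\<in>QG G. v \<bullet> x = 0}" "span {x\<in>QG G. v \<bullet> x = 0} = {x. v \<bullet> x = 0}"
proof -
  show sp: "span {x\<in>QG G. v \<bullet> x = 0} = {x. v \<bullet> x = 0}"
    using span_face[OF v(2)] span_H0_ker[OF v(3,4)] by simp
  have "is_face (QG G) {x\<in>QG G. v \<bullet> x = 0}"
    unfolding is_face_def using v(1) QG_nonneg[OF v(2)] unfolding rv_def by blast
  moreover have "dim {x\<in>QG G. v \<bullet> x = 0} = CARD('n) - 1"
    using sp dim_ker[OF v(3)] dim_span[of "{x\<in>QG G. v \<bullet> x = 0}"] by simp
  ultimately show "is_facet (QG G) {x\<in>QG G. v \<bullet> x = 0}"
    unfolding is_facet_def using dim_QG card_pos by simp
qed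

lemma F2:
  assumes F: "is_facet (QG G) F"
  shows "\<exists>v'. rv v' \<and> Dv v' \<and> v' \<noteq> 0 \<and> CARD('n) - 1 \<le> dim (H0 v') \<and> restr G v' \<in> EG G \<and>
             span F = {x. v' \<bullet> x = 0}"
proof -
  obtain u where u: "\<forall>i. u $ i \<in> \<rat>" "\<forall>x\<in>QG G. 0 \<le> u \<bullet> x" "F = {x\<in>QG G. u \<bullet> x = 0}"
    and dF: "dim F + 1 = dim (QG G)"
    using F unfolding is_facet_def is_face_def by blast
  have ru: "rv u" using u(1) unfolding rv_def .
  have Du: "Dv u" unfolding Dv_def using u(2) G_sub_QG by auto
  have dH: "dim (H0 u) = CARD('n) - 1"
    using dF dim_QG span_face[OF Du] dim_span[of F] dim_span[of "H0 u"] u(3) by simp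
  have unz: "u \<noteq> 0"
  proof
    assume "u = 0"
    hence "F = QG G" using u(3) by auto
    thus False using dF by simp
  qed
  have dH': "CARD('n) - 1 \<le> dim (H0 u)" using dH by simp
  from PS[OF ru unz E1[OF ru Du unz dH']] obtain c where c: "c > 0" "c \<in> \<rat>" "restr G (c *\<^sub>R u) \<in> EG G" by blast
  have H0eq: "H0 (c *\<^sub>R u) = H0 u" unfolding H0_def using c(1) by auto
  have "span F = {x. u \<bullet> x = 0}" using span_face[OF Du] span_H0_ker[OF unz dH'] u(3) by simp
  also have "\<dots> = {x. (c *\<^sub>R u) \<bullet> x = 0}" using c(1) by auto
  finally have sF: "span F = {x. (c *\<^sub>R u) \<bullet> x = 0}" .
  have "rv (c *\<^sub>R u)" using ru c(2) by (rule rv_scale[rotated])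
  moreover have "Dv (c *\<^sub>R u)" using Du c(1) unfolding Dv_def by auto
  moreover have "c *\<^sub>R u \<noteq> 0" using c(1) unz by simp
  ultimately show ?thesis using H0eq dH' c(3) sF by (intro exI[of _ "c *\<^sub>R u"]) simp
qed

end

locale ctx2 = ctx G H for G H :: "(real^'n) set" +
  fixes S :: "(real^'n) set" and cor :: "real^'n \<Rightarrow> real^'n" and a :: "real^'n"
  assumes aS: "a \<in> S" and aL: "a \<in> ZG G" and cor_lat: "cor a \<in> lattice" and cor2: "cor a \<bullet> a = 2"
    and domA: "\<forall>g\<in>G. 0 \<le> cor a \<bullet> g" and Winv: "refl a (cor a) ` ZG G \<subseteq> ZG G"
    and Wstab: "\<forall>Hy\<in>facet_hyperplanes (QG G). refl a (cor a) ` Hy \<in> facet_hyperplanes (QG G)"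
    and chamber: "\<forall>F. is_facet (QG G) F \<longrightarrow> F \<inter> open_chamber S cor \<noteq> {}"
    and basis: "part_of_basis G (EG G)"
begin

abbreviation "s \<equiv> refl a (cor a)"

lemma Dv_cor: "Dv (cor a)" using domA unfolding Dv_def .

lemma rv_cor: "rv (cor a)" using cor_lat lattice_rv by auto

lemma chamber_pt:
  assumes v: "rv v" "Dv v" "v \<noteq> 0" "CARD('n) - 1 \<le> dim (H0 v)"
  shows "\<exists>x\<in>QG G. v \<bullet> x = 0 \<and> 0 < cor a \<bullet> x"
proof -
  have "{x\<in>QG G. v \<bullet> x = 0} \<inter> open_chamber S cor \<noteq> {}" using chamber F1(1)[OF v] by blast
  then obtain x where "x \<in> QG G" "v \<bullet> x = 0" "x \<in> open_chamber S cor" by blast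
  thus ?thesis using aS unfolding open_chamber_def by auto
qed

lemma EG_dualZ: "d \<in> EG G \<Longrightarrow> d \<in> dualZ G" unfolding EG_def primitive_def by auto

lemma EG_prim: "d \<in> EG G \<Longrightarrow> primitive G d" unfolding EG_def by auto

lemma dualZ_int_vec: "restr G v \<in> dualZ G \<Longrightarrow> x \<in> ZG G \<Longrightarrow> v \<bullet> x \<in> \<int>"
  unfolding dualZ_def restr_def by auto

end


context ctx2 begin

lemma restr_cor_Z: "restr G (cor a) \<in> dualZ G"
proof -
  have "restr G (cor a) \<in> homQ G" using restr_homQ[OF rv_cor Glat] .
  moreover have "\<forall>x\<in>ZG G. restr G (cor a) x \<in> \<int>"
    using L_lat cor_lat lattice_inner_int unfolding restr_def by auto
  ultimately show ?thesis unfolding dualZ_def by auto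
qed

lemma s_L: "x \<in> ZG G \<Longrightarrow> s x \<in> ZG G" using Winv by auto

lemma RA:
  assumes dE: "d \<in> EG G" and dnz: "d a \<noteq> 0"
  shows "d a = 1 \<and> (\<exists>d'\<in>EG G. d' \<noteq> d \<and> d' a = 1 \<and> restr G (cor a) = (\<lambda>x. d x + d' x))"
proof -
  obtain v where v: "rv v" "Dv v" "v \<noteq> 0" "d = restr G v" "CARD('n) - 1 \<le> dim (H0 v)"
    using E_rep[OF dE] by blast
  define k where "k = v \<bullet> a"
  have da: "d a = k" unfolding v(4) k_def restr_def using aL by simp
  have dZ: "d \<in> dualZ G" using EG_dualZ[OF dE] .
  have kZ: "k \<in> \<int>" using dZ aL da unfolding dualZ_def by auto
  have k0: "k \<noteq> 0" using dnz da by simp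
  obtain x where x: "x \<in> QG G" "v \<bullet> x = 0" "0 < cor a \<bullet> x" using chamber_pt[OF v(1,2,3,5)] by blast
  have "span {x\<in>QG G. v \<bullet> x = 0} \<in> facet_hyperplanes (QG G)"
    unfolding facet_hyperplanes_def using F1(1)[OF v(1,2,3,5)]
    by (intro CollectI exI[of _ "{x\<in>QG G. v \<bullet> x = 0}"]) simp
  hence "s ` span {x\<in>QG G. v \<bullet> x = 0} \<in> facet_hyperplanes (QG G)" by (rule bspec[OF Wstab])
  then obtain F' where F': "is_facet (QG G) F'" "s ` span {x\<in>QG G. v \<bullet> x = 0} = span F'"
    unfolding facet_hyperplanes_def by blast
  obtain v' where v': "rv v'" "Dv v'" "v' \<noteq> 0" "CARD('n) - 1 \<le> dim (H0 v')" "restr G v' \<in> EG G"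
      "span F' = {x. v' \<bullet> x = 0}" using F2[OF F'(1)] by blast
  define w where "w = v - k *\<^sub>R cor a"
  have kerw: "{y. w \<bullet> y = 0} = {y. v' \<bullet> y = 0}"
    using F'(2) v'(6) F1(2)[OF v(1,2,3,5)] refl_ker[OF cor2, of v] unfolding w_def k_def by simp
  have "\<forall>y. v' \<bullet> y = 0 \<longrightarrow> w \<bullet> y = 0"
  proof (intro allI impI)
    fix y assume "v' \<bullet> y = 0"
    hence "y \<in> {y. w \<bullet> y = 0}" unfolding kerw by simp
    thus "w \<bullet> y = 0" by simp
  qed
  then obtain l where l: "w = l *\<^sub>R v'" using kernel_lemma by blast
  have rvw: "rv w" unfolding w_def using v(1) rv_cor kZ Ints_subset_Rats by (intro rv_diff rv_scale) auto
  have wint: "w \<bullet> y \<in> \<int>" if y: "y \<in> ZG G" for y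
  proof -
    have "v \<bullet> y \<in> \<int>" using dZ y unfolding v(4) by (rule dualZ_int_vec)
    moreover have "cor a \<bullet> y \<in> \<int>" using cor_lat y L_lat lattice_inner_int by auto
    ultimately show ?thesis unfolding w_def using kZ by (simp add: inner_diff_left)
  qed
  have dsZ: "restr G w \<in> dualZ G"
    using restr_homQ[OF rvw Glat] wint unfolding dualZ_def restr_def by auto
  have w_s: "w \<bullet> s y = v \<bullet> y" for y
  proof -
    have "v \<bullet> s (s y) = w \<bullet> s y" using refl_inner[of v a "cor a" "s y"] unfolding w_def k_def by simp
    thus ?thesis using refl_invol[OF cor2] by simp
  qed
  have wnz: "w \<noteq> 0"
  proof
    assume "w = 0"
    hence "v' \<in> {y. w \<bullet> y = 0}" by simp
    hence "v' \<bullet> v' = 0" unfolding kerw by simp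
    thus False using v'(3) by simp
  qed
  have dsprim: "primitive G (restr G w)"
    unfolding primitive_def
  proof (intro conjI ballI allI impI)
    show "restr G w \<in> dualZ G" by (rule dsZ)
    show "restr G w \<noteq> (\<lambda>_. 0)" by (rule restr_nonzero[OF wnz])
    fix d' m assume d': "d' \<in> dualZ G" "restr G w = (\<lambda>x. of_int m * d' x)"
    define d'' where "d'' = (\<lambda>x. if x \<in> ZG G then d' (s x) else 0)"
    have d'h: "d' \<in> homQ G" using d'(1) unfolding dualZ_def by auto
    have "d'' \<in> homQ G" unfolding homQ_def mem_Collect_eq
    proof (intro conjI ballI allI impI)
      fix x assume "x \<in> ZG G" thus "d'' x \<in> \<rat>" unfolding d''_def using d'h s_L unfolding homQ_def by auto
    next
      fix x y assume xy: "x \<in> ZG G" "y \<in> ZG G"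
      have "d'' (x + y) = d' (s x + s y)" unfolding d''_def using ZG_add[OF xy] refl_add[of a "cor a" x y] by simp
      also have "\<dots> = d' (s x) + d' (s y)" by (rule hom_add[OF d'h s_L[OF xy(1)] s_L[OF xy(2)]])
      finally show "d'' (x + y) = d'' x + d'' y" unfolding d''_def using xy by simp
    next
      fix x assume "x \<notin> ZG G" thus "d'' x = 0" unfolding d''_def by simp
    qed
    moreover have "\<forall>x\<in>ZG G. d'' x \<in> \<int>" unfolding d''_def using d'(1) s_L unfolding dualZ_def by auto
    ultimately have d''Z: "d'' \<in> dualZ G" unfolding dualZ_def by auto
    have "d = (\<lambda>x. of_int m * d'' x)"
    proof
      fix x show "d x = of_int m * d'' x"
      proof (cases "x \<in> ZG G")
        case True
        have "d x = w \<bullet> s x" unfolding v(4) restr_def using True w_s by simp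
        also have "\<dots> = restr G w (s x)" unfolding restr_def using s_L[OF True] by simp
        also have "\<dots> = of_int m * d' (s x)" using d'(2) by simp
        finally show ?thesis unfolding d''_def using True by simp
      next
        case False thus ?thesis unfolding v(4) restr_def d''_def by simp
      qed
    qed
    thus "\<bar>m\<bar> = 1" by (rule prim_unit[OF EG_prim[OF dE] d''Z])
  qed
  have "\<exists>x0\<in>ZG G. v' \<bullet> x0 \<noteq> 0"
  proof (rule ccontr)
    assume "\<not> ?thesis"
    hence "v' = 0" using vec_zero_on_L[of v'] by auto
    thus False using v'(3) by simp
  qed
  then obtain x0 where x0: "x0 \<in> ZG G" "v' \<bullet> x0 \<noteq> 0" by blast
  have "v' \<bullet> x0 \<in> \<int>" using EG_dualZ[OF v'(5)] x0(1) by (rule dualZ_int_vec)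
  moreover have "w \<bullet> x0 \<in> \<int>" using wint x0(1) .
  moreover have "l = (w \<bullet> x0) / (v' \<bullet> x0)" using l x0(2) by simp
  ultimately have lQ: "l \<in> \<rat>" using Ints_subset_Rats by (auto intro!: Rats_divide)
  have "restr G w = (\<lambda>x. l * restr G v' x)" unfolding l restr_scale ..
  from PL[OF dsprim EG_prim[OF v'(5)] this lQ] have l1: "l = 1 \<or> l = -1" .
  have xv': "0 \<le> v' \<bullet> x" using QG_nonneg[OF v'(2) x(1)] .
  show ?thesis
  proof (cases "l = 1")
    case True
    hence kc: "k *\<^sub>R cor a = v - v'" using l unfolding w_def by (auto simp: algebra_simps)
    have "k * (cor a \<bullet> x) = v \<bullet> x - v' \<bullet> x" using arg_cong[OF kc, of "\<lambda>z. z \<bullet> x"] by (simp add: inner_diff_left)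
    hence "k * (cor a \<bullet> x) \<le> 0" using x(2) xv' by simp
    hence "k \<le> 0" using x(3) by (simp add: mult_le_0_iff)
    obtain y where y: "y \<in> QG G" "v' \<bullet> y = 0" "0 < cor a \<bullet> y" using chamber_pt[OF v'(1-4)] by blast
    have "k * (cor a \<bullet> y) = v \<bullet> y - v' \<bullet> y" using arg_cong[OF kc, of "\<lambda>z. z \<bullet> y"] by (simp add: inner_diff_left)
    hence "k * (cor a \<bullet> y) \<ge> 0" using y(2) QG_nonneg[OF v(2) y(1)] by simp
    hence "k \<ge> 0" using y(3) by (simp add: zero_le_mult_iff)
    thus ?thesis using \<open>k \<le> 0\<close> k0 by simp
  next
    case False
    hence "l = -1" using l1 by simp
    hence kc: "k *\<^sub>R cor a = v + v'" using l unfolding w_def by (simp add: algebra_simps)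
    have "k * (cor a \<bullet> x) = v \<bullet> x + v' \<bullet> x" using arg_cong[OF kc, of "\<lambda>z. z \<bullet> x"] by (simp add: inner_add_left)
    hence kx: "k * (cor a \<bullet> x) = v' \<bullet> x" using x(2) by simp
    hence "0 \<le> k * (cor a \<bullet> x)" using xv' by simp
    hence "k \<ge> 0" using x(3) by (simp add: zero_le_mult_iff)
    hence kpos: "k > 0" using k0 by simp
    have vv': "v' \<noteq> v"
    proof
      assume "v' = v"
      hence "k * (cor a \<bullet> x) = 0" using kx x(2) by simp
      thus False using kpos x(3) by simp
    qed
    have ddne: "restr G v' \<noteq> d"
    proof
      assume "restr G v' = d"
      hence "v' = v" using restr_inj unfolding v(4) by simp
      thus False using vv' by simp
    qed
    obtain K where K: "k = of_int K" using kZ by (auto elim: Ints_cases)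
    have eq: "(\<lambda>x. of_int K * restr G (cor a) x) = (\<lambda>x. d x + restr G v' x)"
      using arg_cong[OF kc, of "restr G"] unfolding v(4) restr_scale restr_add K .
    have "K dvd 1" by (rule PB1[OF basis dE v'(5) ddne[symmetric] restr_cor_Z eq])
    hence "K = 1" using kpos K by auto
    hence k1: "k = 1" using K by simp
    hence ca: "cor a = v + v'" using kc by simp
    have "v' \<bullet> a = 1" using cor2 ca k1 unfolding k_def by (simp add: inner_add_left)
    hence "restr G v' a = 1" unfolding restr_def using aL by simp
    moreover have "restr G (cor a) = (\<lambda>x. d x + restr G v' x)" unfolding ca restr_add v(4) ..
    ultimately have "restr G v' \<in> EG G \<and> restr G v' \<noteq> d \<and> restr G v' a = 1 \<and> restr G (cor a) = (\<lambda>x. d x + restr G v' x)"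
      using v'(5) ddne by simp
    hence "\<exists>d'\<in>EG G. d' \<noteq> d \<and> d' a = 1 \<and> restr G (cor a) = (\<lambda>x. d x + d' x)" by (intro bexI[of _ "restr G v'"]) simp_all
    thus ?thesis using da k1 by simp
  qed
qed

theorem main_ctx:
  "(\<exists>d1 d2. d1 \<noteq> d2 \<and> a_set G cor a = {d1, d2} \<and> d1 \<in> EG G \<and> d2 \<in> EG G \<and>
            restr G (cor a) = (\<lambda>x. d1 x + d2 x)) \<and>
         (\<forall>d\<in>EG G. d a > 0 \<longrightarrow> d a = 1)"
proof -
  have "cor a \<bullet> a \<noteq> 0" using cor2 by simp
  hence "\<exists>d\<in>EG G. d a \<noteq> 0"
    using descent[OF aL, of "card (Hp (cor a))", rule_format, of "cor a"] rv_cor Dv_cor by auto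
  then obtain d1 where d1: "d1 \<in> EG G" "d1 a \<noteq> 0" by blast
  from RA[OF d1] obtain d2 where d2: "d1 a = 1" "d2 \<in> EG G" "d2 \<noteq> d1" "d2 a = 1"
    "restr G (cor a) = (\<lambda>x. d1 x + d2 x)" by blast
  have claimP: "e \<in> {d1, d2}" if e: "e \<in> EG G" "e a = 1" for e
  proof -
    from RA[OF e(1)] e(2) obtain e' where e': "e' \<in> EG G" "restr G (cor a) = (\<lambda>x. e x + e' x)" by auto
    have "(\<lambda>x. e x + e' x) = (\<lambda>x. d1 x + d2 x)" using e'(2) d2(5) by simp
    thus ?thesis by (rule PB2[OF basis e(1) e'(1) d1(1) d2(2)])
  qed
  have aset: "a_set G cor a = {d1, d2}"
  proof
    show "{d1, d2} \<subseteq> a_set G cor a"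
      using d1(1) d2 EG_dualZ unfolding a_set_def by auto
    show "a_set G cor a \<subseteq> {d1, d2}"
    proof
      fix d assume "d \<in> a_set G cor a"
      hence d: "d \<in> dualZ G" "d a = 1" "d \<in> EG G \<or> (\<lambda>x. restr G (cor a) x - d x) \<in> EG G"
        unfolding a_set_def by auto
      show "d \<in> {d1, d2}"
      proof (cases "d \<in> EG G")
        case True thus ?thesis using claimP d(2) by blast
      next
        case False
        hence eE: "(\<lambda>x. restr G (cor a) x - d x) \<in> EG G" using d(3) by auto
        have "restr G (cor a) a = 2" unfolding restr_def using aL cor2 by simp
        hence ea: "(\<lambda>x. restr G (cor a) x - d x) a = 1" using d(2) by simp
        from RA[OF eE] ea obtain e' where e': "e' \<in> EG G" "e' a = 1"
          "restr G (cor a) = (\<lambda>x. (restr G (cor a) x - d x) + e' x)" by auto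
        have "d = e'"
        proof
          fix x show "d x = e' x" using fun_cong[OF e'(3), of x] by simp
        qed
        thus ?thesis using claimP e'(1,2) by blast
      qed
    qed
  qed
  have part2: "\<forall>d\<in>EG G. d a > 0 \<longrightarrow> d a = 1"
  proof (intro ballI impI)
    fix d assume "d \<in> EG G" "d a > 0"
    from RA[OF this(1)] this(2) show "d a = 1" by simp
  qed
  have "d1 \<noteq> d2 \<and> a_set G cor a = {d1, d2} \<and> d1 \<in> EG G \<and> d2 \<in> EG G \<and> restr G (cor a) = (\<lambda>x. d1 x + d2 x)"
    using aset d1(1) d2 by simp
  hence "\<exists>d1 d2. d1 \<noteq> d2 \<and> a_set G cor a = {d1, d2} \<and> d1 \<in> EG G \<and> d2 \<in> EG G \<and> restr G (cor a) = (\<lambda>x. d1 x + d2 x)"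
    by (intro exI)
  thus ?thesis using part2 by (intro conjI)
qed

end


theorem mainTheorem16:
  fixes R S G :: "(real ^ 'n) set" and cor :: "(real ^ 'n) \<Rightarrow> real ^ 'n" and a :: "real ^ 'n"
  assumes "reduced_root_datum R cor"
    and "is_base R S"
    and "reflective S cor G"
    and "S \<subseteq> ZG G"
    and "part_of_basis G (EG G)"
    and "\<forall>w\<in>weyl S cor. w ` ZG G \<subseteq> ZG G"
    and "a \<in> S"
  shows "(\<exists>d1 d2. d1 \<noteq> d2 \<and> a_set G cor a = {d1, d2} \<and> d1 \<in> EG G \<and> d2 \<in> EG G \<and>
            restr G (cor a) = (\<lambda>x. d1 x + d2 x)) \<and>
         (\<forall>d\<in>EG G. d a > 0 \<longrightarrow> d a = 1)"
proof -
  have rr: "R \<subseteq> lattice" "cor ` R \<subseteq> lattice" "\<forall>a\<in>R. cor a \<bullet> a = 2"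
    using assms(1) unfolding reduced_root_datum_def by auto
  have SR: "S \<subseteq> R" using assms(2) unfolding is_base_def by auto
  have rf: "fin_gen_monoid G" "G \<subseteq> dominant S cor" "dim (ZG G) = CARD('n)"
    "\<forall>w\<in>weyl S cor. \<forall>H\<in>facet_hyperplanes (QG G). w ` H \<in> facet_hyperplanes (QG G)"
    "\<forall>F. is_facet (QG G) F \<longrightarrow> F \<inter> open_chamber S cor \<noteq> {}"
    using assms(3) unfolding reflective_def by auto
  obtain H where H: "finite H" "G = {x. \<exists>c :: (real ^ 'n) \<Rightarrow> nat. x = (\<Sum>h\<in>H. of_nat (c h) *\<^sub>R h)}"
    using rf(1) unfolding fin_gen_monoid_def by auto
  have sw: "refl a (cor a) \<in> weyl S cor"
    using weyl.weyl_step[OF weyl.weyl_id assms(7), of cor] by simp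
  have "span (ZG G) = UNIV" using rf(3) dim_eq_full[of "ZG G"] by simp
  moreover have "G \<subseteq> lattice" using rf(2) unfolding dominant_def by auto
  moreover have "\<forall>g\<in>G. 0 \<le> cor a \<bullet> g" using rf(2) assms(7) unfolding dominant_def by auto
  moreover have "a \<in> R" using SR assms(7) by auto
  hence "cor a \<in> lattice" "cor a \<bullet> a = 2" using rr by auto
  moreover have "refl a (cor a) ` ZG G \<subseteq> ZG G" using assms(6) sw by auto
  moreover have "\<forall>Hy\<in>facet_hyperplanes (QG G). refl a (cor a) ` Hy \<in> facet_hyperplanes (QG G)"
    using rf(4) sw by auto
  ultimately interpret c2: ctx2 G H S cor a
    using H assms(4,5,7) rf(5) by unfold_locales auto
  show ?thesis by (rule c2.main_ctx)
qed


end
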